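(* Assume model $\mathcal M_{\mathrm s}$ and Assumption A1, and let $V_0=0$, $V_{t+1}=\dfrac{q(X_{1,t+1})/p(X_{1,t+1})}{(1-\theta)(1-V_t)/(\theta+(1-\theta)V_t)+q(X_{1,t+1})/p(X_{1,t+1})}$. Then: (1) for each $t\ge1$, $(V_1,\dots,V_t)$ has a continuous and strictly positive joint Lebesgue density on $(0,1)^t$; (2) for any $(v_1,\dots,v_t)\in(0,1)^t$, $\mathbb P(V_1\le v_1,\dots,V_t\le v_t)>0$; (3) for any $(v_1,\dots,v_t)\in(0,1)^t$, the conditional distribution of $V_{t+1}$ given $\{V_1\le v_1,\dots,V_t\le v_t\}$ has a continuous and positive density on $(0,1)$.
   Context: Stream $1$ has observations $X_{1,t}$, $t=1,2,\dots$, and change point $\tau_1$. Model $\mathcal M_{\mathrm s}$ (for this stream): $\mathbb P(\tau_1=m)=\theta(1-\theta)^m$, $m=0,1,2,\dots$, $\theta\in(0,1)$; conditionally on $\tau_1$, the $X_{1,t}$ are independent with density $p$ if $t\le\tau_1$ and $q$ if $t>\tau_1$. Assumption A1: for $Z_1\sim p$ and $Z_2\sim q$, the likelihood ratios $q(Z_1)/p(Z_1)$ and $q(Z_2)/p(Z_2)$ have continuous and strictly positive Lebesgue densities on $\mathbb R_+$. *)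

theory Defs
  imports "HOL-Probability.Probability"
begin

definition LR :: "(real \<Rightarrow> real) \<Rightarrow> (real \<Rightarrow> real) \<Rightarrow> real \<Rightarrow> real" where
  "LR p q x = q x / p x"

primrec Vseq :: "real \<Rightarrow> (real \<Rightarrow> real) \<Rightarrow> (real \<Rightarrow> real) \<Rightarrow> (nat \<Rightarrow> 'a \<Rightarrow> real)
                  \<Rightarrow> nat \<Rightarrow> 'a \<Rightarrow> real" where
  "Vseq \<theta> p q X 0 \<omega> = 0"
| "Vseq \<theta> p q X (Suc t) \<omega> =
     LR p q (X (Suc t) \<omega>) /
       ((1 - \<theta>) * (1 - Vseq \<theta> p q X t \<omega>) / (\<theta> + (1 - \<theta>) * Vseq \<theta> p q X t \<omega>)
        + LR p q (X (Suc t) \<omega>))"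

text \<open>Model M_s for one stream: tau geometric(theta) on {0,1,...}; given tau, the
  observations X_1, X_2, ... are independent with density p for t \<le> tau and q for t > tau.\<close>
definition model_Ms :: "'a measure \<Rightarrow> real \<Rightarrow> (real \<Rightarrow> real) \<Rightarrow> (real \<Rightarrow> real)
                         \<Rightarrow> ('a \<Rightarrow> nat) \<Rightarrow> (nat \<Rightarrow> 'a \<Rightarrow> real) \<Rightarrow> bool" where
  "model_Ms M \<theta> p q \<tau> X \<longleftrightarrow>
     prob_space M \<and> 0 < \<theta> \<and> \<theta> < 1 \<and>
     p \<in> borel_measurable borel \<and> q \<in> borel_measurable borel \<and>
     (\<forall>x. 0 \<le> p x) \<and> (\<forall>x. 0 \<le> q x) \<and>
     (\<integral>\<^sup>+ x. ennreal (p x) \<partial>lborel) = 1 \<and> (\<integral>\<^sup>+ x. ennreal (q x) \<partial>lborel) = 1 \<and>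
     \<tau> \<in> measurable M (count_space UNIV) \<and>
     (\<forall>t. X t \<in> borel_measurable M) \<and>
     (\<forall>m n (B :: nat \<Rightarrow> real set). (\<forall>i\<in>{1..n}. B i \<in> sets borel) \<longrightarrow>
        measure M {\<omega> \<in> space M. \<tau> \<omega> = m \<and> (\<forall>i\<in>{1..n}. X i \<omega> \<in> B i)}
        = \<theta> * (1 - \<theta>) ^ m *
          (\<Prod>i\<in>{1..n}. measure (density lborel (\<lambda>x. ennreal (if i \<le> m then p x else q x))) (B i)))"

definition cont_pos_density_Rplus :: "'b measure \<Rightarrow> ('b \<Rightarrow> real) \<Rightarrow> bool" where
  "cont_pos_density_Rplus N Y \<longleftrightarrow>
     (\<exists>f :: real \<Rightarrow> real. distributed N lborel Y (\<lambda>y. ennreal (f y)) \<and>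
        continuous_on {0<..} f \<and> (\<forall>y>0. 0 < f y) \<and> (\<forall>y\<le>0. f y = 0))"

definition assumption_A1 :: "(real \<Rightarrow> real) \<Rightarrow> (real \<Rightarrow> real) \<Rightarrow> bool" where
  "assumption_A1 p q \<longleftrightarrow>
     cont_pos_density_Rplus (density lborel (\<lambda>x. ennreal (p x))) (LR p q) \<and>
     cont_pos_density_Rplus (density lborel (\<lambda>x. ennreal (q x))) (LR p q)"

definition unit_cube :: "nat \<Rightarrow> (nat \<Rightarrow> real) set" where
  "unit_cube t = PiE {1..t} (\<lambda>_. {0<..<1})"

end

theory Submission
  imports Defs
begin

definition kernA :: "(real \<Rightarrow> real) \<Rightarrow> real \<Rightarrow> real \<Rightarrow> real" where
  "kernA f a s = (if 0 < s \<and> s < 1 then f (a * s / (1 - s)) * (a / (1 - s)^2) else 0)"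

lemma kernA_meas[measurable]:
  assumes [measurable]: "f \<in> borel_measurable borel"
  shows "(\<lambda>s. kernA f a s) \<in> borel_measurable borel"
  unfolding kernA_def by measurable

lemma sup_ind:
  assumes "incseq S"
  shows "(SUP k. (F::ennreal) * indicator (S k) z) = F * indicator (\<Union>k. S k) z"
proof (cases "z \<in> (\<Union>k. S k)")
  case True
  then obtain k0 where k0: "z \<in> S k0" by auto
  have "(SUP k. F * indicator (S k) z) = F"
  proof (rule antisym)
    show "(SUP k. F * indicator (S k) z) \<le> F"
      by (rule SUP_least) (auto split: split_indicator)
    show "F \<le> (SUP k. F * indicator (S k) z)"
      by (rule SUP_upper2[of k0]) (use k0 in auto)
  qed
  then show ?thesis using True by simp
next
  case False
  then show ?thesis by auto
qed

lemma incseq_ind_mult: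
  assumes "incseq S"
  shows "incseq (\<lambda>k z. (F z :: ennreal) * indicator (S k) z)"
proof (rule incseq_SucI, rule le_funI)
  fix k z
  have "S k \<subseteq> S (Suc k)" using assms by (simp add: incseq_def)
  then show "F z * indicator (S k) z \<le> F z * indicator (S (Suc k)) z"
    by (auto split: split_indicator)
qed

lemma sub_core:
  fixes f :: "real \<Rightarrow> real"
  assumes a: "0 < a" and fm[measurable]: "f \<in> borel_measurable borel"
    and fnn: "\<And>z. 0 \<le> f z" and f0: "\<And>z. z \<le> 0 \<Longrightarrow> f z = 0"
    and y: "0 \<le> y" "y < 1"
  shows "(\<integral>\<^sup>+z. ennreal (f z) * indicator {a*y/(1-y)<..} z \<partial>lborel)
       = (\<integral>\<^sup>+s. ennreal (kernA f a s) * indicator {y<..} s \<partial>lborel)"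
proof -
  define c0 where "c0 = a*y/(1-y)"
  have c0: "0 \<le> c0" using a y unfolding c0_def by simp
  define c where "c k = c0 + real k" for k :: nat
  define us where "us t = t / (a + t)" for t :: real
  define g where "g s = a * s / (1 - s)" for s :: real
  define g' where "g' s = a / (1 - s)^2" for s :: real
  have cpos: "0 \<le> c k" for k using c0 by (simp add: c_def)
  have gus: "g (us t) = t" if "0 \<le> t" for t
  proof -
    have at: "a + t > 0" using a that by simp
    have "1 - t / (a + t) = a / (a + t)" using at by (simp add: field_simps)
    then show ?thesis unfolding g_def us_def using at a by simp
  qed
  have us1: "us t < 1" if "0 \<le> t" for t
    using a that unfolding us_def by simp
  have le_us: "s \<le> us t \<longleftrightarrow> g s \<le> t" if "0 \<le> t" "s < 1" for s t
  proof -
    have "a + t > 0" using a that by simp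
    then have "s \<le> us t \<longleftrightarrow> s * (a + t) \<le> t" unfolding us_def by (simp add: field_simps)
    also have "\<dots> \<longleftrightarrow> a * s \<le> t * (1 - s)" by (simp add: algebra_simps)
    also have "\<dots> \<longleftrightarrow> g s \<le> t" using that unfolding g_def by (simp add: field_simps)
    finally show ?thesis .
  qed
  have gy: "g y = c0" unfolding g_def c0_def ..
  have yus: "y \<le> us (c k)" for k
    using le_us[OF cpos y(2)] gy by (simp add: c_def)
  have key: "(\<integral>\<^sup>+z. ennreal (f z * indicator {c0..c k} z) \<partial>lborel)
           = (\<integral>\<^sup>+s. ennreal (kernA f a s * indicator {y..us (c k)} s) \<partial>lborel)" for k
  proof -
    have sub: "(\<integral>\<^sup>+x. ennreal (f x * indicator {g y..g (us (c k))} x) \<partial>lborel) =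
             (\<integral>\<^sup>+x. ennreal (f (g x) * g' x * indicator {y..us (c k)} x) \<partial>lborel)"
    proof (rule nn_integral_substitution)
      show "set_borel_measurable borel {g y..g (us (c k))} f" unfolding set_borel_measurable_def by measurable
      show "(g has_real_derivative g' x) (at x)" if "x \<in> {y..us (c k)}" for x
      proof -
        have "x < 1" using that us1[OF cpos[of k]] by auto
        then show ?thesis unfolding g_def g'_def
          by (auto intro!: derivative_eq_intros simp: power2_eq_square field_simps)
      qed
      show "continuous_on {y..us (c k)} g'"
      proof -
        have "\<forall>x\<in>{y..us (c k)}. (1 - x)^2 \<noteq> 0" using us1[OF cpos[of k]] by auto
        then show ?thesis unfolding g'_def by (auto intro!: continuous_intros)
      qed
      show "0 \<le> g' x" if "x \<in> {y..us (c k)}" for x using a unfolding g'_def by simp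
      show "y \<le> us (c k)" by (rule yus)
    qed
    have "g (us (c k)) = c k" using gus[OF cpos] .
    with gy sub have sub': "(\<integral>\<^sup>+x. ennreal (f x * indicator {c0..c k} x) \<partial>lborel) =
             (\<integral>\<^sup>+x. ennreal (f (g x) * g' x * indicator {y..us (c k)} x) \<partial>lborel)" by simp
    also have "\<dots> = (\<integral>\<^sup>+s. ennreal (kernA f a s * indicator {y..us (c k)} s) \<partial>lborel)"
    proof (rule nn_integral_cong)
      fix s :: real
      show "ennreal (f (g s) * g' s * indicator {y..us (c k)} s) =
            ennreal (kernA f a s * indicator {y..us (c k)} s)"
      proof (cases "s \<in> {y..us (c k)}")
        case True
        then have s1: "s < 1" "0 \<le> s" using us1[OF cpos[of k]] y by auto
        show ?thesis
        proof (cases "s = 0")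
          case True
          then show ?thesis using f0[of 0] by (simp add: kernA_def g_def)
        next
          case False
          then show ?thesis using s1 by (simp add: kernA_def g_def g'_def)
        qed
      qed simp
    qed
    finally show ?thesis .
  qed
  have incc: "incseq (\<lambda>k. {c0..c k})"
    by (auto simp: incseq_def c_def)
  have incu: "incseq (\<lambda>k. {y..us (c k)})"
  proof -
    have "us (c k) \<le> us (c k')" if "k \<le> k'" for k k'
    proof -
      have "c k \<le> c k'" using that by (simp add: c_def)
      moreover have "us (c k) < 1" using us1[OF cpos] .
      ultimately show ?thesis using le_us[OF cpos] gus[OF cpos] by metis
    qed
    then show ?thesis by (auto simp: incseq_def)
  qed
  have Uc: "(\<Union>k. {c0..c k}) = {c0..}"
  proof (rule set_eqI, rule iffI)
    fix z assume "z \<in> {c0..}"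
    then have z: "c0 \<le> z" by simp
    obtain k :: nat where "z - c0 \<le> real k" using real_arch_simple by blast
    then have "z \<in> {c0..c k}" using z unfolding c_def by simp
    then show "z \<in> (\<Union>k. {c0..c k})" by (rule UN_I[rotated]) simp
  next
    fix z assume "z \<in> (\<Union>k. {c0..c k})"
    then show "z \<in> {c0..}" by auto
  qed
  have Uu: "(\<Union>k. {y..us (c k)}) = {y..<1}"
  proof (rule set_eqI, rule iffI)
    fix s assume "s \<in> {y..<1}"
    then have s: "y \<le> s" "s < 1" by auto
    obtain k :: nat where "g s - c0 \<le> real k" using real_arch_simple by blast
    then have "g s \<le> c k" by (simp add: c_def)
    then have "s \<le> us (c k)" using le_us[OF cpos s(2)] by simp
    then have "s \<in> {y..us (c k)}" using s by simp
    then show "s \<in> (\<Union>k. {y..us (c k)})" by (rule UN_I[rotated]) simp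
  next
    fix s assume "s \<in> (\<Union>k. {y..us (c k)})"
    then obtain k where "y \<le> s" "s \<le> us (c k)" by auto
    then show "s \<in> {y..<1}" using us1[OF cpos[of k]] by simp
  qed
  have "(\<integral>\<^sup>+z. ennreal (f z) * indicator {a*y/(1-y)<..} z \<partial>lborel)
      = (\<integral>\<^sup>+z. ennreal (f z) * indicator {c0..} z \<partial>lborel)"
    unfolding c0_def[symmetric]
    by (rule nn_integral_cong_AE) (use AE_lborel_singleton[of c0] in \<open>auto split: split_indicator\<close>)
  also have "\<dots> = (\<integral>\<^sup>+z. (SUP k. ennreal (f z) * indicator {c0..c k} z) \<partial>lborel)"
    by (simp add: sup_ind[OF incc] Uc)
  also have "\<dots> = (SUP k. \<integral>\<^sup>+z. ennreal (f z) * indicator {c0..c k} z \<partial>lborel)"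
    by (rule nn_integral_monotone_convergence_SUP[OF incseq_ind_mult[OF incc]]) simp
  also have "\<dots> = (SUP k. \<integral>\<^sup>+s. ennreal (kernA f a s) * indicator {y..us (c k)} s \<partial>lborel)"
  proof -
    have "(\<integral>\<^sup>+z. ennreal (f z) * indicator {c0..c k} z \<partial>lborel)
        = (\<integral>\<^sup>+s. ennreal (kernA f a s) * indicator {y..us (c k)} s \<partial>lborel)" for k
    proof -
      have "(\<integral>\<^sup>+z. ennreal (f z) * indicator {c0..c k} z \<partial>lborel) = (\<integral>\<^sup>+z. ennreal (f z * indicator {c0..c k} z) \<partial>lborel)"
        by (intro nn_integral_cong) (simp split: split_indicator)
      also have "\<dots> = (\<integral>\<^sup>+s. ennreal (kernA f a s * indicator {y..us (c k)} s) \<partial>lborel)" by (rule key)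
      also have "\<dots> = (\<integral>\<^sup>+s. ennreal (kernA f a s) * indicator {y..us (c k)} s \<partial>lborel)"
        by (intro nn_integral_cong) (simp split: split_indicator)
      finally show ?thesis .
    qed
    then show ?thesis by simp
  qed
  also have "\<dots> = (\<integral>\<^sup>+s. (SUP k. ennreal (kernA f a s) * indicator {y..us (c k)} s) \<partial>lborel)"
    by (rule nn_integral_monotone_convergence_SUP[OF incseq_ind_mult[OF incu], symmetric]) simp
  also have "\<dots> = (\<integral>\<^sup>+s. ennreal (kernA f a s) * indicator {y..<1} s \<partial>lborel)"
    by (simp add: sup_ind[OF incu] Uu)
  also have "\<dots> = (\<integral>\<^sup>+s. ennreal (kernA f a s) * indicator {y<..} s \<partial>lborel)"
    by (rule nn_integral_cong_AE) (use AE_lborel_singleton[of y] in \<open>auto simp: kernA_def split: split_indicator\<close>)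
  finally show ?thesis .
qed

lemma sub1:
  fixes f :: "real \<Rightarrow> real"
  assumes a: "0 < a" and fm[measurable]: "f \<in> borel_measurable borel"
    and fnn: "\<And>z. 0 \<le> f z" and f0: "\<And>z. z \<le> 0 \<Longrightarrow> f z = 0"
    and fint: "(\<integral>\<^sup>+z. ennreal (f z) \<partial>lborel) = 1"
  shows "distr (density lborel (\<lambda>z. ennreal (f z))) lborel (\<lambda>z. z / (a + z))
       = density lborel (\<lambda>s. ennreal (kernA f a s))"
proof (rule measure_eqI_lessThan)
  show "sets (distr (density lborel (\<lambda>z. ennreal (f z))) lborel (\<lambda>z. z / (a + z))) = sets borel" by simp
  show "sets (density lborel (\<lambda>s. ennreal (kernA f a s))) = sets borel" by simp
  have E: "emeasure (distr (density lborel (\<lambda>z. ennreal (f z))) lborel (\<lambda>z. z / (a + z))) {x<..}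
     = (\<integral>\<^sup>+z. ennreal (f z) * indicator {z. x < z / (a + z)} z \<partial>lborel)" for x
    by (subst emeasure_distr) (auto simp: emeasure_density nn_integral_set_ennreal vimage_def
        intro!: nn_integral_cong split: split_indicator)
  show "emeasure (distr (density lborel (\<lambda>z. ennreal (f z))) lborel (\<lambda>z. z / (a + z))) {x<..} < \<infinity>" for x
  proof -
    have "(\<integral>\<^sup>+z. ennreal (f z) * indicator {z. x < z / (a + z)} z \<partial>lborel) \<le> (\<integral>\<^sup>+z. ennreal (f z) \<partial>lborel)"
      by (intro nn_integral_mono) (auto split: split_indicator)
    then show ?thesis unfolding E fint by (simp add: le_less_trans)
  qed
  fix x :: real
  have R: "emeasure (density lborel (\<lambda>s. ennreal (kernA f a s))) {x<..}
      = (\<integral>\<^sup>+s. ennreal (kernA f a s) * indicator {x<..} s \<partial>lborel)"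
    by (simp add: emeasure_density nn_integral_set_ennreal mult.commute)
  show "emeasure (distr (density lborel (\<lambda>z. ennreal (f z))) lborel (\<lambda>z. z / (a + z))) {x<..}
      = emeasure (density lborel (\<lambda>s. ennreal (kernA f a s))) {x<..}"
  proof (cases "x < 1")
    case True
    define y where "y = max x 0"
    have y: "0 \<le> y" "y < 1" using True by (auto simp: y_def)
    have L: "(\<integral>\<^sup>+z. ennreal (f z) * indicator {z. x < z / (a + z)} z \<partial>lborel)
        = (\<integral>\<^sup>+z. ennreal (f z) * indicator {a*y/(1-y)<..} z \<partial>lborel)"
    proof (rule nn_integral_cong)
      fix z :: real
      show "ennreal (f z) * indicator {z. x < z / (a + z)} z = ennreal (f z) * indicator {a*y/(1-y)<..} z"
      proof (cases "z \<le> 0")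
        case True then show ?thesis using f0 by simp
      next
        case False
        then have z: "0 < z" by simp
        have az: "0 < a + z" using a z by simp
        have "x < z / (a + z) \<longleftrightarrow> a*y/(1-y) < z"
        proof (cases "x < 0")
          case True
          then have "y = 0" by (simp add: y_def)
          moreover have "0 < z / (a + z)" using z az by simp
          ultimately show ?thesis using True z by simp
        next
          case False
          then have yx: "y = x" by (simp add: y_def)
          have "x < z / (a + z) \<longleftrightarrow> x * (a + z) < z" using az by (simp add: pos_less_divide_eq)
          also have "\<dots> \<longleftrightarrow> a * x < z * (1 - x)" by (simp add: algebra_simps)
          also have "\<dots> \<longleftrightarrow> a * x / (1 - x) < z" using True by (simp add: pos_divide_less_eq)
          finally show ?thesis using yx by simp
        qed
        then show ?thesis by (simp split: split_indicator)
      qed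
    qed
    have R2: "(\<integral>\<^sup>+s. ennreal (kernA f a s) * indicator {x<..} s \<partial>lborel)
        = (\<integral>\<^sup>+s. ennreal (kernA f a s) * indicator {y<..} s \<partial>lborel)"
      by (intro nn_integral_cong) (auto simp: kernA_def y_def split: split_indicator)
    show ?thesis unfolding E R L R2 by (rule sub_core[OF a fm fnn f0 y])
  next
    case False
    have L0: "(\<integral>\<^sup>+z. ennreal (f z) * indicator {z. x < z / (a + z)} z \<partial>lborel) = 0"
    proof -
      have "ennreal (f z) * indicator {z. x < z / (a + z)} z = 0" for z
      proof (cases "z \<le> 0")
        case True then show ?thesis using f0 by simp
      next
        case False
        then have "z / (a + z) < 1" using a by simp
        then show ?thesis using \<open>\<not> x < 1\<close> by (simp split: split_indicator)
      qed
      then have "(\<lambda>z. ennreal (f z) * indicator {z. x < z / (a + z)} z) = (\<lambda>_. 0)" by (intro ext)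
      then show ?thesis by (simp only:) simp
    qed
    have R0: "(\<integral>\<^sup>+s. ennreal (kernA f a s) * indicator {x<..} s \<partial>lborel) = 0"
    proof -
      have "ennreal (kernA f a s) * indicator {x<..} s = 0" for s
        using \<open>\<not> x < 1\<close> by (auto simp: kernA_def split: split_indicator)
      then have "(\<lambda>s. ennreal (kernA f a s) * indicator {x<..} s) = (\<lambda>_. 0)" by (intro ext)
      then show ?thesis by (simp only:) simp
    qed
    show ?thesis unfolding E R L0 R0 ..
  qed
qed

locale setting =
  fixes \<theta> :: real and p q fp fq :: "real \<Rightarrow> real"
  assumes th: "0 < \<theta>" "\<theta> < 1"
    and pm[measurable]: "p \<in> borel_measurable borel" and qm[measurable]: "q \<in> borel_measurable borel"
    and pnn: "\<And>x. 0 \<le> p x" and qnn: "\<And>x. 0 \<le> q x"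
    and pint: "(\<integral>\<^sup>+x. ennreal (p x) \<partial>lborel) = 1" and qint: "(\<integral>\<^sup>+x. ennreal (q x) \<partial>lborel) = 1"
    and fpd: "distributed (density lborel (\<lambda>x. ennreal (p x))) lborel (LR p q) (\<lambda>y. ennreal (fp y))"
    and fpc: "continuous_on {0<..} fp" and fppos: "\<And>y. y > 0 \<Longrightarrow> 0 < fp y" and fp0: "\<And>y. y \<le> 0 \<Longrightarrow> fp y = 0"
    and fqd: "distributed (density lborel (\<lambda>x. ennreal (q x))) lborel (LR p q) (\<lambda>y. ennreal (fq y))"
    and fqc: "continuous_on {0<..} fq" and fqpos: "\<And>y. y > 0 \<Longrightarrow> 0 < fq y" and fq0: "\<And>y. y \<le> 0 \<Longrightarrow> fq y = 0"
begin

definition F :: "bool \<Rightarrow> real \<Rightarrow> real" where "F b = (if b then fp else fq)"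
definition rho :: "bool \<Rightarrow> real measure" where
  "rho b = density lborel (\<lambda>x. ennreal (if b then p x else q x))"
definition Ath :: "real \<Rightarrow> real" where "Ath w = (1 - \<theta>) * (1 - w) / (\<theta> + (1 - \<theta>) * w)"
definition kern :: "bool \<Rightarrow> real \<Rightarrow> real \<Rightarrow> real" where
  "kern b w x = (if 0 \<le> w \<and> w < 1 then kernA (F b) (Ath w) x else 0)"
definition prev :: "(nat \<Rightarrow> real) \<Rightarrow> nat \<Rightarrow> real" where
  "prev v i = (if i = Suc 0 then 0 else v (i - 1))"
definition G :: "nat \<Rightarrow> nat \<Rightarrow> (nat \<Rightarrow> real) \<Rightarrow> real" where
  "G n m v = (\<Prod>i\<in>{1..n}. kern (i \<le> m) (prev v i) (v i))"
definition VV :: "nat \<Rightarrow> (nat \<Rightarrow> real) \<Rightarrow> real" where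
  "VV i x = Vseq \<theta> p q (\<lambda>j (y::nat\<Rightarrow>real). y j) i x"
definition Psi :: "nat \<Rightarrow> (nat \<Rightarrow> real) \<Rightarrow> (nat \<Rightarrow> real)" where
  "Psi n x = (\<lambda>i\<in>{1..n}. VV i x)"

lemma LR_meas[measurable]: "LR p q \<in> borel_measurable borel"
  unfolding LR_def by measurable

lemma F_nn: "0 \<le> F b y"
  using fppos fp0 fqpos fq0 by (cases "y > 0") (auto simp: F_def intro: less_imp_le)

lemma F0: "y \<le> 0 \<Longrightarrow> F b y = 0"
  using fp0 fq0 by (simp add: F_def)

lemma Fpos: "0 < y \<Longrightarrow> 0 < F b y"
  using fppos fqpos by (simp add: F_def)

lemma Fcont: "continuous_on {0<..} (F b)"
  using fpc fqc by (simp add: F_def)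

lemma Fd: "distributed (rho b) lborel (LR p q) (\<lambda>y. ennreal (F b y))"
  using fpd fqd by (cases b) (simp_all add: F_def rho_def)

lemma F_meas[measurable]: "F b \<in> borel_measurable borel"
proof -
  have "(\<lambda>y. ennreal (F b y)) \<in> borel_measurable lborel"
    using distributed_borel_measurable[OF Fd] .
  then have "(\<lambda>y. enn2real (ennreal (F b y))) \<in> borel_measurable borel" by simp
  moreover have "(\<lambda>y. enn2real (ennreal (F b y))) = F b" using F_nn by (simp add: fun_eq_iff)
  ultimately show ?thesis by simp
qed

lemma rho_space: "emeasure (rho b) (space (rho b)) = 1"
  using pint qint by (cases b) (simp_all add: rho_def emeasure_density)

lemma rho_prob: "prob_space (rho b)"
  by (rule prob_spaceI) (rule rho_space)

lemma sets_rho[simp]: "sets (rho b) = sets borel"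
  by (simp add: rho_def)

lemma F_int: "(\<integral>\<^sup>+y. ennreal (F b y) \<partial>lborel) = 1"
proof -
  have "(\<integral>\<^sup>+y. ennreal (F b y) \<partial>lborel) = emeasure (density lborel (\<lambda>y. ennreal (F b y))) UNIV"
    by (simp add: emeasure_density)
  also have "\<dots> = emeasure (distr (rho b) lborel (LR p q)) UNIV"
    using distributed_distr_eq_density[OF Fd] by simp
  also have "\<dots> = 1" using rho_space
    by (subst emeasure_distr) (auto simp: rho_def)
  finally show ?thesis .
qed

lemma Ath_pos: "0 \<le> w \<Longrightarrow> w < 1 \<Longrightarrow> 0 < Ath w"
proof -
  assume w: "0 \<le> w" "w < 1"
  have "0 < \<theta> + (1 - \<theta>) * w" using th w by (simp add: add_pos_nonneg)
  moreover have "0 < (1 - \<theta>) * (1 - w)" using th w by simp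
  ultimately show ?thesis unfolding Ath_def by simp
qed

lemma step1D:
  assumes w: "0 \<le> w" "w < 1"
  shows "distr (rho b) lborel (\<lambda>y. LR p q y / (Ath w + LR p q y)) = density lborel (\<lambda>x. ennreal (kern b w x))"
proof -
  have "distr (rho b) lborel (\<lambda>y. LR p q y / (Ath w + LR p q y))
      = distr (distr (rho b) lborel (LR p q)) lborel (\<lambda>z. z / (Ath w + z))"
    by (subst distr_distr) (auto simp: rho_def comp_def)
  also have "\<dots> = distr (density lborel (\<lambda>y. ennreal (F b y))) lborel (\<lambda>z. z / (Ath w + z))"
    using distributed_distr_eq_density[OF Fd] by simp
  also have "\<dots> = density lborel (\<lambda>x. ennreal (kernA (F b) (Ath w) x))"
    by (rule sub1[OF Ath_pos[OF w] F_meas F_nn F0 F_int])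
  finally show ?thesis using w by (simp add: kern_def)
qed

lemma kern_nn: "0 \<le> kern b w x"
proof (cases "0 \<le> w \<and> w < 1 \<and> 0 < x \<and> x < 1")
  case True
  then have "0 < Ath w" using Ath_pos by simp
  then show ?thesis using True F_nn unfolding kern_def kernA_def by simp
qed (auto simp: kern_def kernA_def)

lemma kern_meas[measurable]: "(\<lambda>(w, x). kern b w x) \<in> borel_measurable (borel \<Otimes>\<^sub>M borel)"
  unfolding kern_def kernA_def Ath_def by measurable

lemma kern_meas'[measurable (raw)]:
  assumes [measurable]: "f \<in> borel_measurable M" "g \<in> borel_measurable M"
  shows "(\<lambda>z. kern b (f z) (g z)) \<in> borel_measurable M"
  using measurable_comp[OF measurable_Pair[OF assms] kern_meas] by (simp add: comp_def)

lemma VV_Suc: "VV (Suc t) x = LR p q (x (Suc t)) / (Ath (VV t x) + LR p q (x (Suc t)))"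
  by (simp add: VV_def Ath_def)

lemma VV_0[simp]: "VV 0 x = 0"
  by (simp add: VV_def)

lemma VV_local: "(\<And>j. j \<in> {1..i} \<Longrightarrow> x j = y j) \<Longrightarrow> VV i x = VV i y"
proof (induction i)
  case 0 then show ?case by simp
next
  case (Suc i)
  then have "VV i x = VV i y" by auto
  moreover have "x (Suc i) = y (Suc i)" using Suc.prems by simp
  ultimately show ?case by (simp add: VV_Suc)
qed

lemma Vseq_meas:
  assumes "\<And>j. j \<in> {1..i} \<Longrightarrow> X j \<in> borel_measurable N"
  shows "Vseq \<theta> p q X i \<in> borel_measurable N"
  using assms
proof (induction i)
  case 0 then show ?case by simp
next
  case (Suc i)
  then have [measurable]: "Vseq \<theta> p q X i \<in> borel_measurable N" "X (Suc i) \<in> borel_measurable N" by auto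
  show ?case by simp measurable
qed

lemma VV_meas[measurable]:
  assumes "{1..i} \<subseteq> I"
  shows "VV i \<in> borel_measurable (PiM I (\<lambda>_. lborel))"
  unfolding VV_def
  by (rule Vseq_meas) (use assms in auto)

lemma Psi_meas[measurable]: "Psi n \<in> measurable (PiM {1..n} (\<lambda>_. lborel)) (PiM {1..n} (\<lambda>_. lborel))"
  unfolding Psi_def by (rule measurable_restrict) simp

lemma prev_meas:
  "(\<lambda>w. prev w (Suc n)) \<in> borel_measurable (PiM {1..n} (\<lambda>_. lborel))"
proof (cases n)
  case 0 then show ?thesis by (simp add: prev_def)
next
  case (Suc k)
  then have "n \<in> {1..n}" by simp
  then show ?thesis by (simp add: prev_def)
qed

lemma G_meas[measurable]:
  assumes "{1..n} \<subseteq> I"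
  shows "G n m \<in> borel_measurable (PiM I (\<lambda>_. lborel))"
proof -
  have "(\<lambda>v. kern (i \<le> m) (prev v i) (v i)) \<in> borel_measurable (PiM I (\<lambda>_. lborel))" if i: "i \<in> {1..n}" for i
  proof -
    have iI: "i \<in> I" using i assms by auto
    show ?thesis
    proof (cases "i = Suc 0")
      case True then show ?thesis using iI by (simp add: prev_def)
    next
      case False
      then have "i - 1 \<in> {1..n}" using i by auto
      then have "i - 1 \<in> I" using assms by blast
      then show ?thesis using iI False by (simp add: prev_def)
    qed
  qed
  then show ?thesis unfolding G_def by (rule borel_measurable_prod)
qed

lemma G_upd: "G (Suc n) m (w(Suc n := x)) = kern (Suc n \<le> m) (prev w (Suc n)) x * G n m w"
proof -
  have I: "{1..Suc n} = insert (Suc n) {1..n}" by auto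
  have "(\<Prod>i\<in>{1..n}. kern (i \<le> m) (prev (w(Suc n := x)) i) ((w(Suc n := x)) i)) = G n m w"
    unfolding G_def by (rule prod.cong) (auto simp: prev_def)
  moreover have "prev (w(Suc n := x)) (Suc n) = prev w (Suc n)" by (simp add: prev_def)
  ultimately show ?thesis unfolding G_def[of "Suc n"] I by simp
qed

lemma G_zero_if:
  assumes "\<not> (0 \<le> prev w (Suc n) \<and> prev w (Suc n) < 1)"
  shows "G n m w = 0"
proof -
  have n: "n \<noteq> 0"
  proof
    assume "n = 0" then show False using assms by (simp add: prev_def)
  qed
  then have "n \<in> {1..n}" by simp
  moreover have "kern (n \<le> m) (prev w n) (w n) = 0"
    using assms n by (auto simp: prev_def kern_def kernA_def)
  ultimately show ?thesis unfolding G_def by (meson finite_atLeastAtMost prod_zero)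
qed

end

context setting
begin

lemma R_psf: "product_sigma_finite (\<lambda>i. rho (i \<le> m))"
  by (intro product_sigma_finite.intro prob_space_imp_sigma_finite rho_prob)

lemma L_psf: "product_sigma_finite (\<lambda>_::nat. lborel::real measure)"
  by (intro product_sigma_finite.intro) (rule lborel.sigma_finite_measure_axioms)

lemma setsR: "sets (PiM I (\<lambda>i. rho (i \<le> m))) = sets (PiM I (\<lambda>_. lborel))"
  by (intro sets_PiM_cong) simp_all

lemma measR: "measurable (PiM I (\<lambda>i. rho (i \<le> m))) N = measurable (PiM I (\<lambda>_. lborel)) N"
  by (rule measurable_cong_sets[OF setsR refl])

lemma meas_rho: "measurable (rho b) N = measurable borel N"
  by (rule measurable_cong_sets) simp_all

lemma Psi_upd:
  "Psi (Suc n) (x(Suc n := y)) =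
     (Psi n x)(Suc n := LR p q y / (Ath (prev (Psi n x) (Suc n)) + LR p q y))"
proof (rule ext)
  fix i
  have loc: "VV i (x(Suc n := y)) = VV i x" if "i \<le> n" for i
    by (rule VV_local) (use that in auto)
  have pv: "prev (Psi n x) (Suc n) = VV n x"
    by (cases n) (simp_all add: prev_def Psi_def)
  show "Psi (Suc n) (x(Suc n := y)) i =
     ((Psi n x)(Suc n := LR p q y / (Ath (prev (Psi n x) (Suc n)) + LR p q y))) i"
  proof (cases "i = Suc n")
    case True
    have "Psi (Suc n) (x(Suc n := y)) i = VV (Suc n) (x(Suc n := y))" using True by (simp add: Psi_def)
    also have "\<dots> = LR p q y / (Ath (VV n x) + LR p q y)" using loc[of n] by (simp add: VV_Suc)
    finally show ?thesis using True pv by simp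
  next
    case False
    then show ?thesis using loc[of i] by (auto simp: Psi_def)
  qed
qed

lemma KL:
  assumes "\<phi> \<in> borel_measurable (PiM {1..n} (\<lambda>_. lborel))"
  shows "(\<integral>\<^sup>+x. \<phi> (Psi n x) \<partial>PiM {1..n} (\<lambda>i. rho (i \<le> m)))
       = (\<integral>\<^sup>+v. \<phi> v * ennreal (G n m v) \<partial>PiM {1..n} (\<lambda>_. lborel))"
  using assms
proof (induction n arbitrary: \<phi>)
  case 0
  have e: "{1..0::nat} = {}" by simp
  have r: "Psi 0 x = (\<lambda>_. undefined)" for x by (simp add: Psi_def restrict_def fun_eq_iff)
  show ?case unfolding e by (simp add: PiM_empty r G_def nn_integral_count_space_finite)
next
  case (Suc n)
  note phim[measurable] = Suc.prems
  have IN: "{1..Suc n} = insert (Suc n) {1..n}" by auto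
  interpret R: product_sigma_finite "\<lambda>i. rho (i \<le> m)" by (rule R_psf)
  interpret L: product_sigma_finite "\<lambda>_::nat. lborel::real measure" by (rule L_psf)
  define u where "u w y = LR p q y / (Ath (prev w (Suc n)) + LR p q y)" for w y
  define \<psi> where "\<psi> w = (\<integral>\<^sup>+y. \<phi> (w(Suc n := u w y)) \<partial>rho (Suc n \<le> m))" for w
  have [measurable]: "(\<lambda>w. prev w (Suc n)) \<in> borel_measurable (PiM {1..n} (\<lambda>_. lborel))"
    by (rule prev_meas)
  have Athm[measurable]: "Ath \<in> borel_measurable borel" unfolding Ath_def by measurable
  have pfm[measurable]: "(\<lambda>z. prev (fst z) (Suc n)) \<in> borel_measurable (PiM {1..n} (\<lambda>_. lborel) \<Otimes>\<^sub>M rho (Suc n \<le> m))"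
    using measurable_comp[OF measurable_fst prev_meas] by (simp add: comp_def)
  have um[measurable]: "(\<lambda>(w, y). u w y) \<in> borel_measurable (PiM {1..n} (\<lambda>_. lborel) \<Otimes>\<^sub>M rho (Suc n \<le> m))"
  proof -
    have a1: "(\<lambda>z. Ath (prev (fst z) (Suc n))) \<in> borel_measurable (PiM {1..n} (\<lambda>_. lborel) \<Otimes>\<^sub>M rho (Suc n \<le> m))"
      using measurable_comp[OF pfm Athm] by (simp add: comp_def)
    have LRr: "LR p q \<in> borel_measurable (rho (Suc n \<le> m))"
      using LR_meas measurable_cong_sets[OF sets_rho refl] by blast
    have a2: "(\<lambda>z. LR p q (snd z)) \<in> borel_measurable (PiM {1..n} (\<lambda>_. lborel) \<Otimes>\<^sub>M rho (Suc n \<le> m))"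
      using measurable_comp[OF measurable_snd LRr] by (simp add: comp_def)
    show ?thesis unfolding u_def case_prod_beta'
      by (intro borel_measurable_divide borel_measurable_add a1 a2)
  qed
  have updm: "(\<lambda>(w, y). w(Suc n := u w y)) \<in> measurable (PiM {1..n} (\<lambda>_. lborel) \<Otimes>\<^sub>M rho (Suc n \<le> m)) (PiM {1..Suc n} (\<lambda>_. lborel))"
  proof -
    have "(\<lambda>z. (fst z)(Suc n := (\<lambda>(w, y). u w y) z)) \<in> measurable (PiM {1..n} (\<lambda>_. lborel) \<Otimes>\<^sub>M rho (Suc n \<le> m)) (PiM {1..Suc n} (\<lambda>_. lborel))"
    proof (rule measurable_fun_upd[where J="{1..n}"])
      show "{1..Suc n} = {1..n} \<union> {Suc n}" by auto
      show "fst \<in> measurable (PiM {1..n} (\<lambda>_. lborel) \<Otimes>\<^sub>M rho (Suc n \<le> m)) (PiM {1..n} (\<lambda>_. lborel))"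
        by (rule measurable_fst)
      show "(\<lambda>(w, y). u w y) \<in> measurable (PiM {1..n} (\<lambda>_. lborel) \<Otimes>\<^sub>M rho (Suc n \<le> m)) lborel"
        using um by simp
    qed
    then show ?thesis by (simp add: case_prod_beta')
  qed
  have psim: "\<psi> \<in> borel_measurable (PiM {1..n} (\<lambda>_. lborel))"
  proof -
    have "(\<lambda>(w, y). \<phi> (w(Suc n := u w y))) \<in> borel_measurable (PiM {1..n} (\<lambda>_. lborel) \<Otimes>\<^sub>M rho (Suc n \<le> m))"
      using measurable_comp[OF updm phim] by (simp add: comp_def case_prod_beta')
    then show ?thesis unfolding \<psi>_def by (rule sigma_finite_measure.borel_measurable_nn_integral[OF prob_space_imp_sigma_finite[OF rho_prob]])
  qed
  have m1: "(\<lambda>x. \<phi> (Psi (Suc n) x)) \<in> borel_measurable (PiM (insert (Suc n) {1..n}) (\<lambda>i. rho (i \<le> m)))"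
    unfolding measR IN[symmetric] by measurable
  have "(\<integral>\<^sup>+x. \<phi> (Psi (Suc n) x) \<partial>PiM {1..Suc n} (\<lambda>i. rho (i \<le> m)))
      = (\<integral>\<^sup>+x. (\<integral>\<^sup>+y. \<phi> (Psi (Suc n) (x(Suc n := y))) \<partial>rho (Suc n \<le> m)) \<partial>PiM {1..n} (\<lambda>i. rho (i \<le> m)))"
    unfolding IN by (rule R.product_nn_integral_insert[OF _ _ m1]) auto
  also have "\<dots> = (\<integral>\<^sup>+x. \<psi> (Psi n x) \<partial>PiM {1..n} (\<lambda>i. rho (i \<le> m)))"
    by (simp add: Psi_upd \<psi>_def u_def)
  also have "\<dots> = (\<integral>\<^sup>+w. \<psi> w * ennreal (G n m w) \<partial>PiM {1..n} (\<lambda>_. lborel))"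
    by (rule Suc.IH[OF psim])
  also have "\<dots> = (\<integral>\<^sup>+w. (\<integral>\<^sup>+x. \<phi> (w(Suc n := x)) * ennreal (G (Suc n) m (w(Suc n := x))) \<partial>lborel) \<partial>PiM {1..n} (\<lambda>_. lborel))"
  proof (rule nn_integral_cong)
    fix w assume w: "w \<in> space (PiM {1..n} (\<lambda>_. lborel :: real measure))"
    have phiw[measurable]: "(\<lambda>x. \<phi> (w(Suc n := x))) \<in> borel_measurable lborel"
    proof -
      have "(\<lambda>x. w(Suc n := x)) \<in> measurable lborel (PiM {1..Suc n} (\<lambda>_. lborel))"
        using measurable_component_update[OF w, of "Suc n"] IN by simp
      from measurable_comp[OF this phim] show ?thesis by (simp add: comp_def)
    qed
    show "\<psi> w * ennreal (G n m w) = (\<integral>\<^sup>+x. \<phi> (w(Suc n := x)) * ennreal (G (Suc n) m (w(Suc n := x))) \<partial>lborel)"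
    proof (cases "0 \<le> prev w (Suc n) \<and> prev w (Suc n) < 1")
      case True
      have uwm: "u w \<in> measurable (rho (Suc n \<le> m)) lborel"
        unfolding meas_rho u_def by measurable
      have "\<psi> w = (\<integral>\<^sup>+x. \<phi> (w(Suc n := x)) \<partial>distr (rho (Suc n \<le> m)) lborel (u w))"
        unfolding \<psi>_def by (subst nn_integral_distr[OF uwm]) auto
      also have "distr (rho (Suc n \<le> m)) lborel (u w) = density lborel (\<lambda>x. ennreal (kern (Suc n \<le> m) (prev w (Suc n)) x))"
        unfolding u_def by (rule step1D) (use True in auto)
      finally have "\<psi> w = (\<integral>\<^sup>+x. \<phi> (w(Suc n := x)) \<partial>density lborel (\<lambda>x. ennreal (kern (Suc n \<le> m) (prev w (Suc n)) x)))" .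
      also have "\<dots> = (\<integral>\<^sup>+x. ennreal (kern (Suc n \<le> m) (prev w (Suc n)) x) * \<phi> (w(Suc n := x)) \<partial>lborel)"
        by (rule nn_integral_density) (simp_all add: phiw)
      finally have "\<psi> w = (\<integral>\<^sup>+x. ennreal (kern (Suc n \<le> m) (prev w (Suc n)) x) * \<phi> (w(Suc n := x)) \<partial>lborel)" .
      then have "\<psi> w * ennreal (G n m w) = (\<integral>\<^sup>+x. ennreal (kern (Suc n \<le> m) (prev w (Suc n)) x) * \<phi> (w(Suc n := x)) * ennreal (G n m w) \<partial>lborel)"
        by (simp add: nn_integral_multc)
      also have "\<dots> = (\<integral>\<^sup>+x. \<phi> (w(Suc n := x)) * ennreal (G (Suc n) m (w(Suc n := x))) \<partial>lborel)"
      proof (rule nn_integral_cong)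
        fix x
        have "0 \<le> G n m w" unfolding G_def by (intro prod_nonneg) (simp add: kern_nn)
        then show "ennreal (kern (Suc n \<le> m) (prev w (Suc n)) x) * \<phi> (w(Suc n := x)) * ennreal (G n m w) =
              \<phi> (w(Suc n := x)) * ennreal (G (Suc n) m (w(Suc n := x)))"
          by (simp add: G_upd ennreal_mult kern_nn mult_ac)
      qed
      finally show ?thesis .
    next
      case False
      then have "G n m w = 0" by (rule G_zero_if)
      then show ?thesis by (simp add: G_upd)
    qed
  qed
  also have "\<dots> = (\<integral>\<^sup>+v. \<phi> v * ennreal (G (Suc n) m v) \<partial>PiM {1..Suc n} (\<lambda>_. lborel))"
    unfolding IN
  proof (rule L.product_nn_integral_insert[symmetric])
    have "G (Suc n) m \<in> borel_measurable (PiM {1..Suc n} (\<lambda>_. lborel))" by (rule G_meas) simp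
    then show "(\<lambda>v. \<phi> v * ennreal (G (Suc n) m v)) \<in> borel_measurable (PiM (insert (Suc n) {1..n}) (\<lambda>_. lborel))"
      unfolding IN[symmetric] by measurable
  qed auto
  finally show ?case .
qed

end

context setting
begin

lemma model_int:
  assumes PM: "prob_space M" and taum: "\<tau> \<in> measurable M (count_space UNIV)"
    and Xm: "\<And>t. X t \<in> borel_measurable M"
    and law: "\<And>m n (B :: nat \<Rightarrow> real set). (\<forall>i\<in>{1..n}. B i \<in> sets borel) \<longrightarrow>
        measure M {\<omega> \<in> space M. \<tau> \<omega> = m \<and> (\<forall>i\<in>{1..n}. X i \<omega> \<in> B i)}
        = \<theta> * (1 - \<theta>) ^ m *
          (\<Prod>i\<in>{1..n}. measure (density lborel (\<lambda>x. ennreal (if i \<le> m then p x else q x))) (B i))"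
    and \<Phi>m[measurable]: "\<Phi> \<in> borel_measurable (PiM {1..n} (\<lambda>_. lborel))"
  shows "(\<integral>\<^sup>+\<omega>. \<Phi> (\<lambda>i\<in>{1..n}. X i \<omega>) * indicator {\<omega>\<in>space M. \<tau> \<omega> = m} \<omega> \<partial>M)
       = ennreal (\<theta> * (1 - \<theta>) ^ m) * (\<integral>\<^sup>+x. \<Phi> x \<partial>PiM {1..n} (\<lambda>i. rho (i \<le> m)))"
proof -
  interpret M: prob_space M by (rule PM)
  interpret R: product_sigma_finite "\<lambda>i. rho (i \<le> m)" by (rule R_psf)
  define S where "S = {\<omega>\<in>space M. \<tau> \<omega> = m}"
  have S: "S \<in> sets M"
  proof -
    have "\<tau> -` {m} \<inter> space M \<in> sets M" by (rule measurable_sets[OF taum]) simp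
    moreover have "\<tau> -` {m} \<inter> space M = S" by (auto simp: S_def)
    ultimately show ?thesis by simp
  qed
  define Xv where "Xv \<omega> = (\<lambda>i\<in>{1..n}. X i \<omega>)" for \<omega>
  have Xvm[measurable]: "Xv \<in> measurable M (PiM {1..n} (\<lambda>_. lborel))"
    unfolding Xv_def by (rule measurable_restrict) (simp add: Xm)
  have Xvm': "Xv \<in> measurable (density M (indicator S)) (PiM {1..n} (\<lambda>_. lborel))"
    using Xvm measurable_cong_sets[of "density M (indicator S)" M "PiM {1..n} (\<lambda>_. lborel)" "PiM {1..n} (\<lambda>_. lborel)"] by simp
  define D where "D = distr (density M (indicator S)) (PiM {1..n} (\<lambda>_. lborel)) Xv"
  define c where "c = ennreal (\<theta> * (1 - \<theta>) ^ m)"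
  have DA: "emeasure D B = emeasure M (S \<inter> Xv -` B \<inter> space M)" if B: "B \<in> sets (PiM {1..n} (\<lambda>_. lborel))" for B
  proof -
    have "emeasure D B = emeasure (density M (indicator S)) (Xv -` B \<inter> space M)"
      unfolding D_def by (subst emeasure_distr[OF Xvm' B]) simp
    also have "\<dots> = emeasure M (S \<inter> (Xv -` B \<inter> space M))"
      by (rule emeasure_restricted[OF S]) (rule measurable_sets[OF Xvm B])
    finally show ?thesis by (simp add: Int_assoc)
  qed
  have D: "D = density (PiM {1..n} (\<lambda>i. rho (i \<le> m))) (\<lambda>_. c)"
  proof (rule measure_eqI_PiM_finite[where I="{1..n}" and M="\<lambda>_. lborel" and A="\<lambda>_. space (PiM {1..n} (\<lambda>_. lborel))"])
    show "finite {1..n}" by simp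
    show "sets D = sets (PiM {1..n} (\<lambda>_. lborel))" by (simp add: D_def)
    show "sets (density (PiM {1..n} (\<lambda>i. rho (i \<le> m))) (\<lambda>_. c)) = sets (PiM {1..n} (\<lambda>_. lborel))"
      by (simp add: setsR)
  next
    fix A :: "nat \<Rightarrow> real set" assume A: "\<And>i. i \<in> {1..n} \<Longrightarrow> A i \<in> sets lborel"
    have PA: "Pi\<^sub>E {1..n} A \<in> sets (PiM {1..n} (\<lambda>_. lborel))"
      by (rule sets_PiM_I_finite) (use A in auto)
    have pre: "S \<inter> Xv -` Pi\<^sub>E {1..n} A \<inter> space M
        = {\<omega> \<in> space M. \<tau> \<omega> = m \<and> (\<forall>i\<in>{1..n}. X i \<omega> \<in> A i)}"
      by (auto simp: Xv_def S_def PiE_iff)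
    have mprod: "0 \<le> (\<Prod>i\<in>{1..n}. measure (rho (i \<le> m)) (A i))"
      by (intro prod_nonneg) simp
    have "emeasure D (Pi\<^sub>E {1..n} A) = ennreal (measure M {\<omega> \<in> space M. \<tau> \<omega> = m \<and> (\<forall>i\<in>{1..n}. X i \<omega> \<in> A i)})"
      unfolding DA[OF PA] pre by (rule M.emeasure_eq_measure)
    also have "\<dots> = ennreal (\<theta> * (1 - \<theta>) ^ m * (\<Prod>i\<in>{1..n}. measure (rho (i \<le> m)) (A i)))"
      using law[of n A m] A by (simp add: rho_def)
    also have "\<dots> = c * (\<Prod>i\<in>{1..n}. emeasure (rho (i \<le> m)) (A i))"
    proof -
      have "(\<Prod>i\<in>{1..n}. emeasure (rho (i \<le> m)) (A i)) = (\<Prod>i\<in>{1..n}. ennreal (measure (rho (i \<le> m)) (A i)))"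
        by (intro prod.cong refl) (simp add: finite_measure.emeasure_eq_measure[OF prob_space.finite_measure[OF rho_prob]])
      also have "\<dots> = ennreal (\<Prod>i\<in>{1..n}. measure (rho (i \<le> m)) (A i))"
        by (rule prod_ennreal) simp
      finally show ?thesis using th mprod by (simp add: c_def ennreal_mult)
    qed
    also have "\<dots> = emeasure (density (PiM {1..n} (\<lambda>i. rho (i \<le> m))) (\<lambda>_. c)) (Pi\<^sub>E {1..n} A)"
    proof -
      have PA': "Pi\<^sub>E {1..n} A \<in> sets (PiM {1..n} (\<lambda>i. rho (i \<le> m)))" using PA by (simp add: setsR)
      have "emeasure (PiM {1..n} (\<lambda>i. rho (i \<le> m))) (Pi\<^sub>E {1..n} A) = (\<Prod>i\<in>{1..n}. emeasure (rho (i \<le> m)) (A i))"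
        by (rule R.emeasure_PiM) (use A in auto)
      then show ?thesis
        unfolding emeasure_density_const[OF PA'] by simp
    qed
    finally show "emeasure D (Pi\<^sub>E {1..n} A) = emeasure (density (PiM {1..n} (\<lambda>i. rho (i \<le> m))) (\<lambda>_. c)) (Pi\<^sub>E {1..n} A)" .
  next
    show "range (\<lambda>_. space (PiM {1..n} (\<lambda>_. lborel))) \<subseteq> prod_algebra {1..n} (\<lambda>_. lborel)"
      by (auto simp: space_PiM intro!: prod_algebraI_finite)
    show "(\<Union>i::nat. space (PiM {1..n} (\<lambda>_. lborel))) = space (PiM {1..n} (\<lambda>_. lborel :: real measure))" by simp
    show "emeasure D (space (PiM {1..n} (\<lambda>_. lborel))) \<noteq> \<infinity>" for i :: nat
      by (simp add: DA M.emeasure_finite)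
  qed
  have "(\<integral>\<^sup>+\<omega>. \<Phi> (\<lambda>i\<in>{1..n}. X i \<omega>) * indicator S \<omega> \<partial>M) = (\<integral>\<^sup>+\<omega>. indicator S \<omega> * \<Phi> (Xv \<omega>) \<partial>M)"
    by (simp add: Xv_def mult.commute)
  also have "\<dots> = (\<integral>\<^sup>+\<omega>. \<Phi> (Xv \<omega>) \<partial>density M (indicator S))"
    by (rule nn_integral_density[symmetric]) (use S measurable_compose[OF Xvm \<Phi>m] in auto)
  also have "\<dots> = (\<integral>\<^sup>+x. \<Phi> x \<partial>D)"
    unfolding D_def by (rule nn_integral_distr[symmetric]) (use Xvm' \<Phi>m in auto)
  also have "\<dots> = (\<integral>\<^sup>+x. c * \<Phi> x \<partial>PiM {1..n} (\<lambda>i. rho (i \<le> m)))"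
    unfolding D by (rule nn_integral_density) (use \<Phi>m in \<open>auto simp: measR\<close>)
  also have "\<dots> = c * (\<integral>\<^sup>+x. \<Phi> x \<partial>PiM {1..n} (\<lambda>i. rho (i \<le> m)))"
    by (rule nn_integral_cmult) (use \<Phi>m in \<open>simp add: measR\<close>)
  finally show ?thesis unfolding S_def c_def .
qed

end

context setting
begin

definition gg :: "nat \<Rightarrow> (nat \<Rightarrow> real) \<Rightarrow> real" where
  "gg n v = (if v \<in> unit_cube n then (\<Sum>m<n. \<theta> * (1 - \<theta>) ^ m * G n m v) + (1 - \<theta>) ^ n * G n n v else 0)"

lemma G_nn: "0 \<le> G n m v"
  unfolding G_def by (intro prod_nonneg) (simp add: kern_nn)

lemma G_big: "n \<le> m \<Longrightarrow> G n m v = G n n v"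
  unfolding G_def by (intro prod.cong refl) auto

lemma kern_zero_x: "\<not> (0 < x \<and> x < 1) \<Longrightarrow> kern b w x = 0"
  by (auto simp: kern_def kernA_def)

lemma G_zero_out:
  assumes "v \<in> space (PiM {1..n} (\<lambda>_. lborel :: real measure))" "v \<notin> unit_cube n"
  shows "G n m v = 0"
proof -
  have ext: "v \<in> extensional {1..n}" using assms(1) by (simp add: space_PiM PiE_iff)
  have "\<exists>i\<in>{1..n}. \<not> (0 < v i \<and> v i < 1)"
  proof (rule ccontr)
    assume "\<not> ?thesis"
    then have "v \<in> unit_cube n" using ext unfolding unit_cube_def PiE_iff by simp
    then show False using assms(2) by simp
  qed
  then obtain i where i: "i \<in> {1..n}" "\<not> (0 < v i \<and> v i < 1)" by blast
  have "kern (i \<le> m) (prev v i) (v i) = 0" by (rule kern_zero_x[OF i(2)])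
  then show ?thesis unfolding G_def using i(1) by (meson finite_atLeastAtMost prod_zero)
qed

lemma gg_nn: "0 \<le> gg n v"
  unfolding gg_def using th G_nn by (auto intro!: add_nonneg_nonneg sum_nonneg mult_nonneg_nonneg)

lemma PS:
  assumes v: "v \<in> space (PiM {1..n} (\<lambda>_. lborel :: real measure))"
  shows "(\<Sum>m. ennreal (\<theta> * (1 - \<theta>) ^ m * G n m v)) = ennreal (gg n v)"
proof (cases "v \<in> unit_cube n")
  case False
  then show ?thesis using G_zero_out[OF v False] by (simp add: gg_def)
next
  case True
  define f where "f m = \<theta> * (1 - \<theta>) ^ m * G n m v" for m
  have fnn: "0 \<le> f m" for m unfolding f_def using th G_nn by simp
  have shift: "(\<lambda>k. f (k + n)) = (\<lambda>k. (\<theta> * (1 - \<theta>) ^ n * G n n v) * (1 - \<theta>) ^ k)"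
  proof (rule ext)
    fix k
    have "G n (k + n) v = G n n v" by (rule G_big) simp
    then show "f (k + n) = (\<theta> * (1 - \<theta>) ^ n * G n n v) * (1 - \<theta>) ^ k"
      by (simp add: f_def power_add mult_ac)
  qed
  have geo: "summable (\<lambda>k. (1 - \<theta>) ^ k)" using th by (intro summable_geometric) simp
  have s1: "summable (\<lambda>k. f (k + n))" unfolding shift by (intro summable_mult geo)
  then have sf: "summable f" by (simp add: summable_iff_shift)
  have "(\<Sum>k. f (k + n)) = (\<theta> * (1 - \<theta>) ^ n * G n n v) * (\<Sum>k. (1 - \<theta>) ^ k)"
    unfolding shift by (rule suminf_mult[OF geo])
  also have "(\<Sum>k. (1 - \<theta>) ^ k) = 1 / \<theta>" using th by (subst suminf_geometric) auto
  finally have "(\<Sum>k. f (k + n)) = (1 - \<theta>) ^ n * G n n v" using th by simp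
  then have "suminf f = (1 - \<theta>) ^ n * G n n v + (\<Sum>m<n. f m)"
    using suminf_split_initial_segment[OF sf, of n] by simp
  then have "suminf f = gg n v" using True by (simp add: gg_def f_def)
  moreover have "(\<Sum>m. ennreal (f m)) = ennreal (suminf f)" by (rule suminf_ennreal2[OF fnn sf])
  ultimately show ?thesis unfolding f_def by simp
qed

lemma Vseq_VV: "Vseq \<theta> p q X i \<omega> = VV i (\<lambda>j. X j \<omega>)"
  by (induction i) (simp_all add: VV_Suc Ath_def)

lemma unit_cube_sets: "unit_cube n \<in> sets (PiM {1..n} (\<lambda>_. lborel))"
  unfolding unit_cube_def by (rule sets_PiM_I_finite) auto

lemma gg_meas[measurable]: "gg n \<in> borel_measurable (PiM {1..n} (\<lambda>_. lborel))"
proof -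
  have [measurable]: "G n m \<in> borel_measurable (PiM {1..n} (\<lambda>_. lborel))" for m by (rule G_meas) simp
  have "(\<lambda>v. if v \<in> unit_cube n then (\<Sum>m<n. \<theta> * (1 - \<theta>) ^ m * G n m v) + (1 - \<theta>) ^ n * G n n v else 0)
      \<in> borel_measurable (PiM {1..n} (\<lambda>_. lborel))"
    by (rule measurable_If_set) (use unit_cube_sets in auto)
  then show ?thesis unfolding gg_def[abs_def] .
qed

lemma P1_int:
  assumes model: "model_Ms M \<theta> p q \<tau> X"
    and \<Phi>m[measurable]: "\<Phi> \<in> borel_measurable (PiM {1..n} (\<lambda>_. lborel))"
  shows "(\<integral>\<^sup>+\<omega>. \<Phi> (\<lambda>i\<in>{1..n}. Vseq \<theta> p q X i \<omega>) \<partial>M)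
       = (\<integral>\<^sup>+v. \<Phi> v * ennreal (gg n v) \<partial>PiM {1..n} (\<lambda>_. lborel))"
proof -
  from model have PM: "prob_space M" and taum: "\<tau> \<in> measurable M (count_space UNIV)"
    and Xm: "\<And>t. X t \<in> borel_measurable M"
    and law: "\<And>m n (B :: nat \<Rightarrow> real set). (\<forall>i\<in>{1..n}. B i \<in> sets borel) \<longrightarrow>
        measure M {\<omega> \<in> space M. \<tau> \<omega> = m \<and> (\<forall>i\<in>{1..n}. X i \<omega> \<in> B i)}
        = \<theta> * (1 - \<theta>) ^ m *
          (\<Prod>i\<in>{1..n}. measure (density lborel (\<lambda>x. ennreal (if i \<le> m then p x else q x))) (B i))"
    unfolding model_Ms_def by auto
  define Xv where "Xv \<omega> = (\<lambda>i\<in>{1..n}. X i \<omega>)" for \<omega>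
  have Xvm[measurable]: "Xv \<in> measurable M (PiM {1..n} (\<lambda>_. lborel))"
    unfolding Xv_def by (rule measurable_restrict) (simp add: Xm)
  define S where "S m = {\<omega>\<in>space M. \<tau> \<omega> = m}" for m
  have S: "S m \<in> sets M" for m
  proof -
    have "\<tau> -` {m} \<inter> space M \<in> sets M" by (rule measurable_sets[OF taum]) simp
    moreover have "\<tau> -` {m} \<inter> space M = S m" by (auto simp: S_def)
    ultimately show ?thesis by simp
  qed
  have VP: "(\<lambda>i\<in>{1..n}. Vseq \<theta> p q X i \<omega>) = Psi n (Xv \<omega>)" for \<omega>
  proof (rule ext)
    fix i
    show "(\<lambda>i\<in>{1..n}. Vseq \<theta> p q X i \<omega>) i = Psi n (Xv \<omega>) i"
    proof (cases "i \<in> {1..n}")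
      case True
      have "VV i (\<lambda>j. X j \<omega>) = VV i (Xv \<omega>)"
        by (rule VV_local) (use True in \<open>auto simp: Xv_def\<close>)
      then show ?thesis using True by (simp add: Psi_def Vseq_VV)
    next
      case False
      then show ?thesis by (auto simp: Psi_def)
    qed
  qed
  have PXm[measurable]: "(\<lambda>\<omega>. \<Phi> (Psi n (Xv \<omega>))) \<in> borel_measurable M" by measurable
  have ind1: "(\<Sum>m. indicator (S m) \<omega> :: ennreal) = 1" if "\<omega> \<in> space M" for \<omega>
  proof -
    have "(\<Sum>m. indicator (S m) \<omega> :: ennreal) = (\<Sum>m\<in>{\<tau> \<omega>}. indicator (S m) \<omega>)"
      by (rule suminf_finite) (auto simp: S_def)
    then show ?thesis using that by (simp add: S_def)
  qed
  have "(\<integral>\<^sup>+\<omega>. \<Phi> (\<lambda>i\<in>{1..n}. Vseq \<theta> p q X i \<omega>) \<partial>M)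
      = (\<integral>\<^sup>+\<omega>. (\<Sum>m. \<Phi> (Psi n (Xv \<omega>)) * indicator (S m) \<omega>) \<partial>M)"
    unfolding VP by (intro nn_integral_cong) (simp add: ennreal_suminf_cmult ind1)
  also have "\<dots> = (\<Sum>m. \<integral>\<^sup>+\<omega>. \<Phi> (Psi n (Xv \<omega>)) * indicator (S m) \<omega> \<partial>M)"
    by (rule nn_integral_suminf) (use S in measurable)
  also have "\<dots> = (\<Sum>m. ennreal (\<theta> * (1 - \<theta>) ^ m) * (\<integral>\<^sup>+x. \<Phi> (Psi n x) \<partial>PiM {1..n} (\<lambda>i. rho (i \<le> m))))"
  proof -
    have "(\<integral>\<^sup>+\<omega>. \<Phi> (Psi n (Xv \<omega>)) * indicator (S m) \<omega> \<partial>M)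
        = ennreal (\<theta> * (1 - \<theta>) ^ m) * (\<integral>\<^sup>+x. \<Phi> (Psi n x) \<partial>PiM {1..n} (\<lambda>i. rho (i \<le> m)))" for m
    proof -
      have \<Phi>Pm: "(\<lambda>x. \<Phi> (Psi n x)) \<in> borel_measurable (PiM {1..n} (\<lambda>_. lborel))" by measurable
      show ?thesis using model_int[OF PM taum Xm law \<Phi>Pm, of m] unfolding Xv_def S_def .
    qed
    then show ?thesis by simp
  qed
  also have "\<dots> = (\<Sum>m. \<integral>\<^sup>+v. \<Phi> v * ennreal (\<theta> * (1 - \<theta>) ^ m * G n m v) \<partial>PiM {1..n} (\<lambda>_. lborel))"
  proof -
    have Gm[measurable]: "G n m \<in> borel_measurable (PiM {1..n} (\<lambda>_. lborel))" for m by (rule G_meas) simp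
    have "ennreal (\<theta> * (1 - \<theta>) ^ m) * (\<integral>\<^sup>+x. \<Phi> (Psi n x) \<partial>PiM {1..n} (\<lambda>i. rho (i \<le> m)))
        = (\<integral>\<^sup>+v. \<Phi> v * ennreal (\<theta> * (1 - \<theta>) ^ m * G n m v) \<partial>PiM {1..n} (\<lambda>_. lborel))" for m
    proof -
      have "ennreal (\<theta> * (1 - \<theta>) ^ m) * (\<integral>\<^sup>+x. \<Phi> (Psi n x) \<partial>PiM {1..n} (\<lambda>i. rho (i \<le> m)))
          = ennreal (\<theta> * (1 - \<theta>) ^ m) * (\<integral>\<^sup>+v. \<Phi> v * ennreal (G n m v) \<partial>PiM {1..n} (\<lambda>_. lborel))"
        using KL[OF \<Phi>m, of m] by simp
      also have "\<dots> = (\<integral>\<^sup>+v. ennreal (\<theta> * (1 - \<theta>) ^ m) * (\<Phi> v * ennreal (G n m v)) \<partial>PiM {1..n} (\<lambda>_. lborel))"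
        by (rule nn_integral_cmult[symmetric]) measurable
      also have "\<dots> = (\<integral>\<^sup>+v. \<Phi> v * ennreal (\<theta> * (1 - \<theta>) ^ m * G n m v) \<partial>PiM {1..n} (\<lambda>_. lborel))"
        using th G_nn by (intro nn_integral_cong) (simp add: ennreal_mult mult_ac)
      finally show ?thesis .
    qed
    then show ?thesis by simp
  qed
  also have "\<dots> = (\<integral>\<^sup>+v. (\<Sum>m. \<Phi> v * ennreal (\<theta> * (1 - \<theta>) ^ m * G n m v)) \<partial>PiM {1..n} (\<lambda>_. lborel))"
  proof (rule nn_integral_suminf[symmetric])
    fix m
    have [measurable]: "G n m \<in> borel_measurable (PiM {1..n} (\<lambda>_. lborel))" by (rule G_meas) simp
    show "(\<lambda>v. \<Phi> v * ennreal (\<theta> * (1 - \<theta>) ^ m * G n m v)) \<in> borel_measurable (PiM {1..n} (\<lambda>_. lborel))"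
      by measurable
  qed
  also have "\<dots> = (\<integral>\<^sup>+v. \<Phi> v * ennreal (gg n v) \<partial>PiM {1..n} (\<lambda>_. lborel))"
    by (intro nn_integral_cong) (simp add: ennreal_suminf_cmult PS)
  finally show ?thesis .
qed

lemma P1_dist:
  assumes model: "model_Ms M \<theta> p q \<tau> X"
  shows "distributed M (PiM {1..n} (\<lambda>_. lborel)) (\<lambda>\<omega>. \<lambda>i\<in>{1..n}. Vseq \<theta> p q X i \<omega>) (\<lambda>v. ennreal (gg n v))"
proof -
  from model have Xm: "\<And>t. X t \<in> borel_measurable M" unfolding model_Ms_def by auto
  have Vm: "(\<lambda>\<omega>. \<lambda>i\<in>{1..n}. Vseq \<theta> p q X i \<omega>) \<in> measurable M (PiM {1..n} (\<lambda>_. lborel))"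
    by (rule measurable_restrict) (simp add: Vseq_meas Xm)
  have "distr M (PiM {1..n} (\<lambda>_. lborel)) (\<lambda>\<omega>. \<lambda>i\<in>{1..n}. Vseq \<theta> p q X i \<omega>) = density (PiM {1..n} (\<lambda>_. lborel)) (\<lambda>v. ennreal (gg n v))"
  proof (rule measure_eqI)
    fix A assume A: "A \<in> sets (distr M (PiM {1..n} (\<lambda>_. lborel)) (\<lambda>\<omega>. \<lambda>i\<in>{1..n}. Vseq \<theta> p q X i \<omega>))"
    then have A': "A \<in> sets (PiM {1..n} (\<lambda>_. lborel))" by simp
    have "emeasure (distr M (PiM {1..n} (\<lambda>_. lborel)) (\<lambda>\<omega>. \<lambda>i\<in>{1..n}. Vseq \<theta> p q X i \<omega>)) A
        = (\<integral>\<^sup>+x. indicator A x \<partial>distr M (PiM {1..n} (\<lambda>_. lborel)) (\<lambda>\<omega>. \<lambda>i\<in>{1..n}. Vseq \<theta> p q X i \<omega>))"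
      using A by simp
    also have "\<dots> = (\<integral>\<^sup>+\<omega>. indicator A (\<lambda>i\<in>{1..n}. Vseq \<theta> p q X i \<omega>) \<partial>M)"
      by (rule nn_integral_distr[OF Vm]) (use A' in simp)
    also have "\<dots> = (\<integral>\<^sup>+v. indicator A v * ennreal (gg n v) \<partial>PiM {1..n} (\<lambda>_. lborel))"
      by (rule P1_int[OF model]) (use A' in simp)
    also have "\<dots> = emeasure (density (PiM {1..n} (\<lambda>_. lborel)) (\<lambda>v. ennreal (gg n v))) A"
    proof -
      have "emeasure (density (PiM {1..n} (\<lambda>_. lborel)) (\<lambda>v. ennreal (gg n v))) A
          = (\<integral>\<^sup>+v. ennreal (gg n v) * indicator A v \<partial>PiM {1..n} (\<lambda>_. lborel))"
      proof -
        have ggm: "(\<lambda>v. ennreal (gg n v)) \<in> borel_measurable (PiM {1..n} (\<lambda>_. lborel))" by measurable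
        show ?thesis using emeasure_density[OF ggm A'] by simp
      qed
      also have "\<dots> = (\<integral>\<^sup>+v. indicator A v * ennreal (gg n v) \<partial>PiM {1..n} (\<lambda>_. lborel))"
        by (intro nn_integral_cong) (simp add: mult.commute)
      finally show ?thesis by simp
    qed
    finally show "emeasure (distr M (PiM {1..n} (\<lambda>_. lborel)) (\<lambda>\<omega>. \<lambda>i\<in>{1..n}. Vseq \<theta> p q X i \<omega>)) A
        = emeasure (density (PiM {1..n} (\<lambda>_. lborel)) (\<lambda>v. ennreal (gg n v))) A" .
  qed simp
  moreover have "(\<lambda>v. ennreal (gg n v)) \<in> borel_measurable (PiM {1..n} (\<lambda>_. lborel))" by measurable
  ultimately show ?thesis unfolding distributed_def using Vm by blast
qed

end

lemma pos_int:
  assumes fm: "f \<in> borel_measurable N" and C: "C \<in> sets N" and Cpos: "0 < emeasure N C"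
    and fpos: "\<And>x. x \<in> C \<Longrightarrow> 0 < f x"
  shows "0 < (\<integral>\<^sup>+x. f x \<partial>N)"
proof (rule ccontr)
  assume "\<not> 0 < (\<integral>\<^sup>+x. f x \<partial>N)"
  then have z: "(\<integral>\<^sup>+x. f x \<partial>N) = 0" using not_gr_zero by blast
  have "AE x in N. f x = 0" using z nn_integral_0_iff_AE[OF fm] by (rule iffD1[rotated])
  then have "AE x in N. x \<notin> C"
  proof (rule AE_mp)
    show "AE x in N. f x = 0 \<longrightarrow> x \<notin> C"
    proof (rule AE_I2, rule impI, rule notI)
      fix x assume "f x = 0" "x \<in> C"
      then show False using fpos[of x] by simp
    qed
  qed
  moreover have "{x \<in> space N. \<not> x \<notin> C} = C" using sets.sets_into_space[OF C] by blast
  ultimately have "emeasure N C = 0" using AE_iff_measurable[OF C, of "\<lambda>x. x \<notin> C"] by simp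
  then show False using Cpos by simp
qed

context setting
begin

lemma kern_cont:
  assumes wc: "continuous_on S w" and xc: "continuous_on S x"
    and r: "\<And>v. v \<in> S \<Longrightarrow> 0 \<le> w v \<and> w v < 1 \<and> 0 < x v \<and> x v < 1"
  shows "continuous_on S (\<lambda>v. kern b (w v) (x v))"
proof -
  have eq: "kern b (w v) (x v) = F b (Ath (w v) * x v / (1 - x v)) * (Ath (w v) / (1 - x v)^2)" if "v \<in> S" for v
    using r[OF that] by (simp add: kern_def kernA_def)
  have d1: "\<theta> + (1 - \<theta>) * w v \<noteq> 0" if "v \<in> S" for v
  proof -
    have "0 < \<theta> + (1 - \<theta>) * w v" using th r[OF that] by (simp add: add_pos_nonneg)
    then show ?thesis by simp
  qed
  have d2: "1 - x v \<noteq> 0" if "v \<in> S" for v using r[OF that] by simp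
  have Ac: "continuous_on S (\<lambda>v. Ath (w v))"
    unfolding Ath_def using d1 by (intro continuous_intros wc) auto
  have argc: "continuous_on S (\<lambda>v. Ath (w v) * x v / (1 - x v))"
    using d2 by (intro continuous_intros Ac xc) auto
  have argpos: "(\<lambda>v. Ath (w v) * x v / (1 - x v)) ` S \<subseteq> {0<..}"
  proof (rule image_subsetI)
    fix v assume v: "v \<in> S"
    have "0 < Ath (w v)" using r[OF v] Ath_pos by blast
    then show "Ath (w v) * x v / (1 - x v) \<in> {0<..}" using r[OF v] by simp
  qed
  have Fc: "continuous_on S (\<lambda>v. F b (Ath (w v) * x v / (1 - x v)))"
    by (rule continuous_on_compose2[OF Fcont argc argpos])
  have "continuous_on S (\<lambda>v. F b (Ath (w v) * x v / (1 - x v)) * (Ath (w v) / (1 - x v)^2))"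
    using d2 by (intro continuous_intros Fc Ac xc) auto
  then show ?thesis by (rule continuous_on_eq) (simp add: eq)
qed

lemma kern_pos:
  assumes "0 \<le> w" "w < 1" "0 < x" "x < 1"
  shows "0 < kern b w x"
proof -
  have A: "0 < Ath w" using Ath_pos assms by simp
  then have "0 < Ath w * x / (1 - x)" using assms by simp
  then have "0 < F b (Ath w * x / (1 - x))" by (rule Fpos)
  then show ?thesis using assms A by (simp add: kern_def kernA_def)
qed

lemma cube_coord: "v \<in> unit_cube n \<Longrightarrow> i \<in> {1..n} \<Longrightarrow> 0 < v i \<and> v i < 1"
  by (auto simp: unit_cube_def PiE_iff)

lemma cube_prev: "v \<in> unit_cube n \<Longrightarrow> i \<in> {1..n} \<Longrightarrow> 0 \<le> prev v i \<and> prev v i < 1"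
proof -
  assume v: "v \<in> unit_cube n" and i: "i \<in> {1..n}"
  show ?thesis
  proof (cases "i = Suc 0")
    case True then show ?thesis by (simp add: prev_def)
  next
    case False
    then have "i - 1 \<in> {1..n}" using i by auto
    then show ?thesis using cube_coord[OF v] False by (simp add: prev_def less_imp_le)
  qed
qed

lemma coord_cont: "continuous_on S (\<lambda>v::nat \<Rightarrow> real. v i)"
  by (rule continuous_on_subset[OF continuous_on_product_coordinates]) simp

lemma prev_cont: "continuous_on S (\<lambda>v. prev v i)"
  by (cases "i = Suc 0") (simp_all add: prev_def coord_cont)

lemma G_cont: "continuous_on (unit_cube n) (G n m)"
  unfolding G_def
proof (rule continuous_on_prod)
  fix i assume i: "i \<in> {1..n}"
  show "continuous_on (unit_cube n) (\<lambda>v. kern (i \<le> m) (prev v i) (v i))"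
    by (rule kern_cont[OF prev_cont coord_cont]) (use cube_coord cube_prev i in blast)
qed

lemma G_pos: "v \<in> unit_cube n \<Longrightarrow> 0 < G n m v"
  unfolding G_def by (intro prod_pos) (use cube_coord cube_prev kern_pos in blast)

lemma gg_cont: "continuous_on (unit_cube n) (gg n)"
proof -
  have "continuous_on (unit_cube n) (\<lambda>v. (\<Sum>m<n. \<theta> * (1 - \<theta>) ^ m * G n m v) + (1 - \<theta>) ^ n * G n n v)"
    by (intro continuous_intros G_cont)
  then show ?thesis by (rule continuous_on_eq) (simp add: gg_def)
qed

lemma gg_pos: "v \<in> unit_cube n \<Longrightarrow> 0 < gg n v"
proof -
  assume v: "v \<in> unit_cube n"
  have "0 \<le> (\<Sum>m<n. \<theta> * (1 - \<theta>) ^ m * G n m v)" using th G_nn by (intro sum_nonneg) simp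
  moreover have "0 < (1 - \<theta>) ^ n * G n n v" using th G_pos[OF v] by simp
  ultimately show ?thesis using v by (simp add: gg_def)
qed

lemma gg_out: "v \<notin> unit_cube n \<Longrightarrow> gg n v = 0"
  by (simp add: gg_def)

lemma P2:
  assumes model: "model_Ms M \<theta> p q \<tau> X" and v0: "v0 \<in> unit_cube t"
  shows "0 < measure M {\<omega> \<in> space M. \<forall>i\<in>{1..t}. Vseq \<theta> p q X i \<omega> \<le> v0 i}"
proof -
  interpret M: prob_space M using model unfolding model_Ms_def by auto
  interpret L: product_sigma_finite "\<lambda>_::nat. lborel::real measure" by (rule L_psf)
  have D: "distributed M (PiM {1..t} (\<lambda>_. lborel)) (\<lambda>\<omega>. \<lambda>i\<in>{1..t}. Vseq \<theta> p q X i \<omega>) (\<lambda>v. ennreal (gg t v))"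
    by (rule P1_dist[OF model])
  define B where "B = Pi\<^sub>E {1..t} (\<lambda>i. {..v0 i})"
  have B: "B \<in> sets (PiM {1..t} (\<lambda>_. lborel))" unfolding B_def by (rule sets_PiM_I_finite) auto
  have pre: "(\<lambda>\<omega>. \<lambda>i\<in>{1..t}. Vseq \<theta> p q X i \<omega>) -` B \<inter> space M = {\<omega> \<in> space M. \<forall>i\<in>{1..t}. Vseq \<theta> p q X i \<omega> \<le> v0 i}"
    by (auto simp: B_def PiE_iff)
  have "emeasure M {\<omega> \<in> space M. \<forall>i\<in>{1..t}. Vseq \<theta> p q X i \<omega> \<le> v0 i}
      = emeasure (distr M (PiM {1..t} (\<lambda>_. lborel)) (\<lambda>\<omega>. \<lambda>i\<in>{1..t}. Vseq \<theta> p q X i \<omega>)) B"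
    unfolding pre[symmetric] by (rule emeasure_distr[symmetric, OF distributed_measurable[OF D] B])
  also have "\<dots> = (\<integral>\<^sup>+v. ennreal (gg t v) * indicator B v \<partial>PiM {1..t} (\<lambda>_. lborel))"
    unfolding distributed_distr_eq_density[OF D]
    by (rule emeasure_density[OF _ B]) (use distributed_borel_measurable[OF D] in simp)
  also have "0 < \<dots>"
  proof (rule pos_int)
    show "(\<lambda>v. ennreal (gg t v) * indicator B v) \<in> borel_measurable (PiM {1..t} (\<lambda>_. lborel))"
      using distributed_borel_measurable[OF D] B by measurable
    define C where "C = Pi\<^sub>E {1..t} (\<lambda>i. {0<..<v0 i})"
    show C: "C \<in> sets (PiM {1..t} (\<lambda>_. lborel))" unfolding C_def by (rule sets_PiM_I_finite) auto
    have "emeasure (PiM {1..t} (\<lambda>_. lborel)) C = (\<Prod>i\<in>{1..t}. emeasure lborel {0<..<v0 i})"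
      unfolding C_def by (rule L.emeasure_PiM) auto
    also have "\<dots> = (\<Prod>i\<in>{1..t}. ennreal (v0 i))"
    proof (intro prod.cong refl)
      fix i assume "i \<in> {1..t}"
      then have "0 \<le> v0 i" using cube_coord[OF v0] by (simp add: less_imp_le)
      then show "emeasure lborel {0<..<v0 i} = ennreal (v0 i)" using emeasure_lborel_Ioo[of 0 "v0 i"] by simp
    qed
    also have "\<dots> = ennreal (\<Prod>i\<in>{1..t}. v0 i)"
      using cube_coord[OF v0] by (intro prod_ennreal) (simp add: less_imp_le)
    moreover have "0 < (\<Prod>i\<in>{1..t}. v0 i)"
      by (rule prod_pos) (use cube_coord[OF v0] in blast)
    ultimately show "0 < emeasure (PiM {1..t} (\<lambda>_. lborel)) C" by simp
    fix v assume v: "v \<in> C"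
    have "v \<in> unit_cube t" using v cube_coord[OF v0] unfolding C_def unit_cube_def
      by (auto simp: PiE_iff) (meson atLeastAtMost_iff less_trans)
    moreover have "v \<in> B" using v unfolding C_def B_def by (auto simp: PiE_iff less_imp_le)
    ultimately show "0 < ennreal (gg t v) * indicator B v" using gg_pos by simp
  qed
  finally have "0 < emeasure M {\<omega> \<in> space M. \<forall>i\<in>{1..t}. Vseq \<theta> p q X i \<omega> \<le> v0 i}" .
  then show ?thesis by (simp add: M.emeasure_eq_measure)
qed

end

context setting
begin

definition aa :: "nat \<Rightarrow> (nat \<Rightarrow> real) \<Rightarrow> real" where
  "aa t w = (\<Sum>m<Suc t. \<theta> * (1 - \<theta>) ^ m * G t m w)"
definition bb :: "nat \<Rightarrow> (nat \<Rightarrow> real) \<Rightarrow> real" where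
  "bb t w = (1 - \<theta>) ^ Suc t * G t t w"
definition KK :: "nat \<Rightarrow> real \<Rightarrow> (nat \<Rightarrow> real) \<Rightarrow> real" where
  "KK t x w = (if w \<in> unit_cube t then aa t w * kern False (prev w (Suc t)) x + bb t w * kern True (prev w (Suc t)) x else 0)"

lemma aa_nn: "0 \<le> aa t w" unfolding aa_def using th G_nn by (intro sum_nonneg) simp
lemma bb_nn: "0 \<le> bb t w" unfolding bb_def using th G_nn by simp
lemma KK_nn: "0 \<le> KK t x w" unfolding KK_def using aa_nn bb_nn kern_nn by (simp add: add_nonneg_nonneg)

lemma aabb: "w \<in> unit_cube t \<Longrightarrow> aa t w + bb t w = gg t w"
proof -
  assume w: "w \<in> unit_cube t"
  have "aa t w = (\<Sum>m<t. \<theta> * (1 - \<theta>) ^ m * G t m w) + \<theta> * (1 - \<theta>) ^ t * G t t w"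
    unfolding aa_def by simp
  moreover have "bb t w = (1 - \<theta>) * ((1 - \<theta>) ^ t * G t t w)" unfolding bb_def by simp
  ultimately have "aa t w + bb t w = (\<Sum>m<t. \<theta> * (1 - \<theta>) ^ m * G t m w) + (\<theta> + (1 - \<theta>)) * ((1 - \<theta>) ^ t * G t t w)"
    by (simp add: algebra_simps)
  then show ?thesis using w by (simp add: gg_def)
qed

lemma cube_upd:
  assumes w: "w \<in> extensional {1..t}"
  shows "w(Suc t := x) \<in> unit_cube (Suc t) \<longleftrightarrow> w \<in> unit_cube t \<and> 0 < x \<and> x < 1"
proof -
  have e: "w(Suc t := x) \<in> extensional {1..Suc t}" using w by (auto simp: extensional_def)
  show ?thesis
    using w e unfolding unit_cube_def PiE_iff
    by (auto simp: le_Suc_eq)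
qed

lemma gg_upd:
  assumes w: "w \<in> space (PiM {1..t} (\<lambda>_. lborel :: real measure))"
  shows "gg (Suc t) (w(Suc t := x)) = KK t x w"
proof -
  have we: "w \<in> extensional {1..t}" using w by (simp add: space_PiM PiE_iff)
  show ?thesis
  proof (cases "w \<in> unit_cube t")
    case False
    then show ?thesis using cube_upd[OF we] by (simp add: gg_def KK_def)
  next
    case wc: True
    show ?thesis
    proof (cases "0 < x \<and> x < 1")
      case False
      then have "w(Suc t := x) \<notin> unit_cube (Suc t)" using cube_upd[OF we] by simp
      then show ?thesis using False wc by (simp add: gg_def KK_def kern_zero_x)
    next
      case True
      then have c: "w(Suc t := x) \<in> unit_cube (Suc t)" using cube_upd[OF we] wc by simp
      have Gm: "G (Suc t) m (w(Suc t := x)) = kern (Suc t \<le> m) (prev w (Suc t)) x * G t m w" for m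
        by (rule G_upd)
      have "G t (Suc t) w = G t t w" by (rule G_big) simp
      then have "gg (Suc t) (w(Suc t := x)) =
          (\<Sum>m<Suc t. \<theta> * (1 - \<theta>) ^ m * (kern False (prev w (Suc t)) x * G t m w))
          + (1 - \<theta>) ^ Suc t * (kern True (prev w (Suc t)) x * G t t w)"
        using c by (simp add: gg_def Gm)
      also have "\<dots> = aa t w * kern False (prev w (Suc t)) x + bb t w * kern True (prev w (Suc t)) x"
      proof -
        have s: "(\<Sum>m<Suc t. \<theta> * (1 - \<theta>) ^ m * (kern False (prev w (Suc t)) x * G t m w))
               = aa t w * kern False (prev w (Suc t)) x"
          unfolding aa_def sum_distrib_right by (rule sum.cong) (simp_all add: mult_ac)
        show ?thesis unfolding s by (simp add: bb_def mult_ac)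
      qed
      finally show ?thesis using wc by (simp add: KK_def)
    qed
  qed
qed

lemma kern_bound:
  assumes c: "0 \<le> c" "c < 1" and ab: "0 < \<alpha>" "\<alpha> \<le> \<beta>" "\<beta> < 1"
  shows "\<exists>C. \<forall>w\<in>{0..c}. \<forall>x\<in>{\<alpha>..\<beta>}. kern b w x \<le> C"
proof -
  let ?S = "{0..c} \<times> {\<alpha>..\<beta>}"
  have cont: "continuous_on ?S (\<lambda>z. kern b (fst z) (snd z))"
    by (rule kern_cont[OF continuous_on_fst[OF continuous_on_id] continuous_on_snd[OF continuous_on_id]])
       (use c ab in auto)
  have "compact ((\<lambda>z. kern b (fst z) (snd z)) ` ?S)"
    by (rule compact_continuous_image[OF cont]) (intro compact_Times compact_Icc)
  then have "bounded ((\<lambda>z. kern b (fst z) (snd z)) ` ?S)" by (rule compact_imp_bounded)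
  then obtain B where B: "\<And>y. y \<in> (\<lambda>z. kern b (fst z) (snd z)) ` ?S \<Longrightarrow> norm y \<le> B"
    unfolding bounded_iff by blast
  show ?thesis
  proof (intro exI ballI)
    fix w x assume "w \<in> {0..c}" "x \<in> {\<alpha>..\<beta>}"
    then have "kern b w x \<in> (\<lambda>z. kern b (fst z) (snd z)) ` ?S" by force
    then show "kern b w x \<le> B" using B by fastforce
  qed
qed

lemma KK_bound:
  assumes v0: "v0 \<in> unit_cube t" and t: "1 \<le> t" and ab: "0 < \<alpha>" "\<alpha> \<le> \<beta>" "\<beta> < 1"
  shows "\<exists>C\<ge>0. \<forall>w. \<forall>x\<in>{\<alpha>..\<beta>}. indicator (Pi\<^sub>E {1..t} (\<lambda>i. {..v0 i})) w * KK t x w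
                    \<le> indicator (Pi\<^sub>E {1..t} (\<lambda>i. {..v0 i})) w * gg t w * C"
proof -
  have tt: "t \<in> {1..t}" using t by simp
  have c: "0 \<le> v0 t" "v0 t < 1" using cube_coord[OF v0 tt] by auto
  obtain C1 where C1: "\<forall>w\<in>{0..v0 t}. \<forall>x\<in>{\<alpha>..\<beta>}. kern False w x \<le> C1"
    using kern_bound[OF c ab] by blast
  obtain C2 where C2: "\<forall>w\<in>{0..v0 t}. \<forall>x\<in>{\<alpha>..\<beta>}. kern True w x \<le> C2"
    using kern_bound[OF c ab] by blast
  define C where "C = max 0 (max C1 C2)"
  show ?thesis
  proof (intro exI conjI allI ballI)
    show "0 \<le> C" by (simp add: C_def)
    fix w x assume x: "x \<in> {\<alpha>..\<beta>}"
    show "indicator (Pi\<^sub>E {1..t} (\<lambda>i. {..v0 i})) w * KK t x w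
          \<le> indicator (Pi\<^sub>E {1..t} (\<lambda>i. {..v0 i})) w * gg t w * C"
    proof (cases "w \<in> Pi\<^sub>E {1..t} (\<lambda>i. {..v0 i}) \<and> w \<in> unit_cube t")
      case True
      then have wB: "w t \<le> v0 t" and wc: "w \<in> unit_cube t" using tt by (auto simp: PiE_iff)
      have pw: "prev w (Suc t) = w t" using t by (simp add: prev_def)
      have wt: "w t \<in> {0..v0 t}" using cube_coord[OF wc tt] wB by simp
      have k1: "kern False (w t) x \<le> C" using C1 wt x by (fastforce simp: C_def)
      have k2: "kern True (w t) x \<le> C" using C2 wt x by (fastforce simp: C_def)
      have "KK t x w = aa t w * kern False (w t) x + bb t w * kern True (w t) x"
        using wc by (simp add: KK_def pw)
      also have "\<dots> \<le> aa t w * C + bb t w * C"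
        by (intro add_mono mult_left_mono k1 k2 aa_nn bb_nn)
      also have "\<dots> = gg t w * C" using aabb[OF wc] by (metis distrib_right)
      finally show ?thesis using True by simp
    next
      case False
      then show ?thesis
      proof (cases "w \<in> Pi\<^sub>E {1..t} (\<lambda>i. {..v0 i})")
        case True
        then have "w \<notin> unit_cube t" using False by simp
        then show ?thesis using True by (simp add: KK_def gg_def)
      qed simp
    qed
  qed
qed

end

locale setting3 = setting +
  fixes M :: "'a measure" and \<tau> :: "'a \<Rightarrow> nat" and X :: "nat \<Rightarrow> 'a \<Rightarrow> real" and t :: nat and v0 :: "nat \<Rightarrow> real"
  assumes model: "model_Ms M \<theta> p q \<tau> X" and t1: "1 \<le> t" and v0: "v0 \<in> unit_cube t"
begin

definition Bx :: "(nat \<Rightarrow> real) set" where "Bx = Pi\<^sub>E {1..t} (\<lambda>i. {..v0 i})"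
definition H :: "real \<Rightarrow> ennreal" where
  "H x = (\<integral>\<^sup>+w. indicator Bx w * ennreal (gg (Suc t) (w(Suc t := x))) \<partial>PiM {1..t} (\<lambda>_. lborel))"

lemma Bx_sets[measurable]: "Bx \<in> sets (PiM {1..t} (\<lambda>_. lborel))"
  unfolding Bx_def by (rule sets_PiM_I_finite) auto

lemma upd_meas: "(\<lambda>z. (snd z)(Suc t := fst z)) \<in> measurable (lborel \<Otimes>\<^sub>M PiM {1..t} (\<lambda>_. lborel)) (PiM {1..Suc t} (\<lambda>_. lborel))"
proof (rule measurable_fun_upd[where J="{1..t}"])
  show "{1..Suc t} = {1..t} \<union> {Suc t}" by auto
qed simp_all

lemma upd_meas1: "w \<in> space (PiM {1..t} (\<lambda>_. lborel)) \<Longrightarrow> (\<lambda>x. w(Suc t := x)) \<in> measurable lborel (PiM {1..Suc t} (\<lambda>_. lborel))"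
  using measurable_component_update[of w "{1..t}" "\<lambda>_. lborel" "Suc t"] by (simp add: atLeastAtMostSuc_conv)

lemma upd_meas2: "(\<lambda>w. w(Suc t := x)) \<in> measurable (PiM {1..t} (\<lambda>_. lborel)) (PiM {1..Suc t} (\<lambda>_. lborel))"
proof (rule measurable_fun_upd[where J="{1..t}"])
  show "{1..Suc t} = {1..t} \<union> {Suc t}" by auto
qed simp_all

lemma integrand_meas:
  "(\<lambda>z. indicator Bx (snd z) * ennreal (gg (Suc t) ((snd z)(Suc t := fst z))))
     \<in> borel_measurable (lborel \<Otimes>\<^sub>M PiM {1..t} (\<lambda>_. lborel))"
proof -
  have "(\<lambda>z. gg (Suc t) ((snd z)(Suc t := fst z))) \<in> borel_measurable (lborel \<Otimes>\<^sub>M PiM {1..t} (\<lambda>_. lborel))"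
    using measurable_comp[OF upd_meas gg_meas] by (simp add: comp_def)
  then show ?thesis by measurable
qed

lemma integrand_meas2:
  "(\<lambda>w. indicator Bx w * ennreal (gg (Suc t) (w(Suc t := x)))) \<in> borel_measurable (PiM {1..t} (\<lambda>_. lborel))"
proof -
  have "(\<lambda>w. gg (Suc t) (w(Suc t := x))) \<in> borel_measurable (PiM {1..t} (\<lambda>_. lborel))"
    using measurable_comp[OF upd_meas2 gg_meas] by (simp add: comp_def)
  then show ?thesis by measurable
qed

lemma H_meas[measurable]: "H \<in> borel_measurable borel"
proof -
  interpret L: product_sigma_finite "\<lambda>_::nat. lborel::real measure" by (rule L_psf)
  interpret S: sigma_finite_measure "PiM {1..t} (\<lambda>_. lborel :: real measure)" by (rule L.sigma_finite) simp
  have "(\<lambda>x. \<integral>\<^sup>+w. indicator Bx w * ennreal (gg (Suc t) (w(Suc t := x))) \<partial>PiM {1..t} (\<lambda>_. lborel)) \<in> borel_measurable lborel"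
    by (rule S.borel_measurable_nn_integral) (use integrand_meas in \<open>simp add: case_prod_beta'\<close>)
  then show ?thesis unfolding H_def[abs_def] by simp
qed

lemma gint: "(\<integral>\<^sup>+w. ennreal (gg t w) \<partial>PiM {1..t} (\<lambda>_. lborel)) = 1"
proof -
  interpret M: prob_space M using model unfolding model_Ms_def by auto
  have "(\<integral>\<^sup>+\<omega>. 1 \<partial>M) = (\<integral>\<^sup>+w. 1 * ennreal (gg t w) \<partial>PiM {1..t} (\<lambda>_. lborel))"
    by (rule P1_int[OF model]) simp
  then show ?thesis by (simp add: M.emeasure_space_1)
qed

lemma H_KK: "H x = (\<integral>\<^sup>+w. ennreal (indicator Bx w * KK t x w) \<partial>PiM {1..t} (\<lambda>_. lborel))"
  unfolding H_def by (intro nn_integral_cong) (simp add: gg_upd indicator_mult_ennreal)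

lemma H_zero: "\<not> (0 < x \<and> x < 1) \<Longrightarrow> H x = 0"
proof -
  assume nx: "\<not> (0 < x \<and> x < 1)"
  have k: "\<And>b w. kern b w x = 0" by (rule kern_zero_x[OF nx])
  have KK0: "\<And>w. KK t x w = 0" by (simp add: KK_def k)
  show ?thesis unfolding H_KK by (simp add: KK0)
qed

lemma H_le:
  assumes "0 < \<alpha>" "\<alpha> \<le> \<beta>" "\<beta> < 1"
  shows "\<exists>C\<ge>0. \<forall>x\<in>{\<alpha>..\<beta>}. \<forall>w. ennreal (indicator Bx w * KK t x w) \<le> ennreal (gg t w) * ennreal C"
proof -
  obtain C where C: "C \<ge> 0" "\<forall>w. \<forall>x\<in>{\<alpha>..\<beta>}. indicator Bx w * KK t x w \<le> indicator Bx w * gg t w * C"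
    using KK_bound[OF v0 t1 assms] unfolding Bx_def by blast
  show ?thesis
  proof (intro exI conjI ballI allI)
    show "0 \<le> C" by (rule C(1))
    fix x w assume x: "x \<in> {\<alpha>..\<beta>}"
    have "indicator Bx w * KK t x w \<le> indicator Bx w * gg t w * C" using C(2) x by blast
    also have "\<dots> \<le> gg t w * C" using gg_nn C(1) by (simp add: indicator_def)
    finally show "ennreal (indicator Bx w * KK t x w) \<le> ennreal (gg t w) * ennreal C"
      using gg_nn C(1) by (simp add: ennreal_mult[symmetric])
  qed
qed

lemma H_fin: "H x < \<infinity>"
proof (cases "0 < x \<and> x < 1")
  case False then show ?thesis by (simp add: H_zero)
next
  case True
  obtain C where C: "C \<ge> 0" "\<forall>y\<in>{x..x}. \<forall>w. ennreal (indicator Bx w * KK t y w) \<le> ennreal (gg t w) * ennreal C"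
    using H_le[of x x] True by auto
  have "H x \<le> (\<integral>\<^sup>+w. ennreal (gg t w) * ennreal C \<partial>PiM {1..t} (\<lambda>_. lborel))"
    unfolding H_KK by (intro nn_integral_mono) (use C in auto)
  also have "\<dots> = (\<integral>\<^sup>+w. ennreal (gg t w) \<partial>PiM {1..t} (\<lambda>_. lborel)) * ennreal C"
    by (rule nn_integral_multc) measurable
  also have "\<dots> = ennreal C" unfolding gint by simp
  finally show ?thesis by (simp add: le_less_trans)
qed

lemma H_pos:
  assumes x: "0 < x" "x < 1"
  shows "0 < H x"
  unfolding H_KK
proof (rule pos_int)
  show "(\<lambda>w. ennreal (indicator Bx w * KK t x w)) \<in> borel_measurable (PiM {1..t} (\<lambda>_. lborel))"
  proof -
    have "(\<lambda>w. indicator Bx w * ennreal (gg (Suc t) (w(Suc t := x)))) \<in> borel_measurable (PiM {1..t} (\<lambda>_. lborel))"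
      by (rule integrand_meas2)
    moreover have "\<And>w. w \<in> space (PiM {1..t} (\<lambda>_. lborel)) \<Longrightarrow>
        indicator Bx w * ennreal (gg (Suc t) (w(Suc t := x))) = ennreal (indicator Bx w * KK t x w)"
      by (simp add: gg_upd indicator_mult_ennreal)
    ultimately show ?thesis by (rule measurable_cong[THEN iffD1, rotated])
  qed
  define C where "C = Pi\<^sub>E {1..t} (\<lambda>i. {0<..<v0 i})"
  show C: "C \<in> sets (PiM {1..t} (\<lambda>_. lborel))" unfolding C_def by (rule sets_PiM_I_finite) auto
  interpret L: product_sigma_finite "\<lambda>_::nat. lborel::real measure" by (rule L_psf)
  have "emeasure (PiM {1..t} (\<lambda>_. lborel)) C = (\<Prod>i\<in>{1..t}. emeasure lborel {0<..<v0 i})"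
    unfolding C_def by (rule L.emeasure_PiM) auto
  also have "\<dots> = (\<Prod>i\<in>{1..t}. ennreal (v0 i))"
  proof (intro prod.cong refl)
    fix i assume "i \<in> {1..t}"
    then have "0 \<le> v0 i" using cube_coord[OF v0] by (simp add: less_imp_le)
    then show "emeasure lborel {0<..<v0 i} = ennreal (v0 i)" using emeasure_lborel_Ioo[of 0 "v0 i"] by simp
  qed
  also have "\<dots> = ennreal (\<Prod>i\<in>{1..t}. v0 i)"
    using cube_coord[OF v0] by (intro prod_ennreal) (simp add: less_imp_le)
  finally have e: "emeasure (PiM {1..t} (\<lambda>_. lborel)) C = ennreal (\<Prod>i\<in>{1..t}. v0 i)" .
  moreover have "0 < (\<Prod>i\<in>{1..t}. v0 i)"
    by (rule prod_pos) (use cube_coord[OF v0] in blast)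
  ultimately show "0 < emeasure (PiM {1..t} (\<lambda>_. lborel)) C" by simp
  fix w assume w: "w \<in> C"
  have wc: "w \<in> unit_cube t" using w cube_coord[OF v0] unfolding C_def unit_cube_def
    by (auto simp: PiE_iff) (meson atLeastAtMost_iff less_trans)
  have wB: "w \<in> Bx" using w unfolding C_def Bx_def by (auto simp: PiE_iff less_imp_le)
  have tt: "t \<in> {1..t}" using t1 by simp
  have pw: "prev w (Suc t) = w t" using t1 by (simp add: prev_def)
  have "0 < bb t w * kern True (w t) x"
    using th G_pos[OF wc] kern_pos[of "w t" x True] cube_coord[OF wc tt] x
    by (simp add: bb_def less_imp_le)
  moreover have "0 \<le> aa t w * kern False (w t) x" using aa_nn kern_nn by simp
  ultimately have "0 < KK t x w" using wc by (simp add: KK_def pw)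
  then show "0 < ennreal (indicator Bx w * KK t x w)" using wB by simp
qed

end

context setting
begin

lemma kern_tendsto:
  assumes a: "0 < a" "a < 1" and c: "c \<longlonglongrightarrow> a"
  shows "(\<lambda>n. kern b w (c n)) \<longlonglongrightarrow> kern b w a"
proof (cases "0 \<le> w \<and> w < 1")
  case True
  have "continuous_on {0<..<1} (\<lambda>x. kern b w x)"
    by (rule kern_cont[OF continuous_on_const continuous_on_id]) (use True in auto)
  moreover have "continuous_on {0<..<1} (\<lambda>x. kern b w x) = (\<forall>x\<in>{0<..<1}. isCont (\<lambda>x. kern b w x) x)"
    by (rule continuous_on_eq_continuous_at) simp
  ultimately have "\<forall>x\<in>{0<..<1}. isCont (\<lambda>x. kern b w x) x" by simp
  then have "isCont (\<lambda>x. kern b w x) a" using a by simp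
  then show ?thesis by (rule isCont_tendsto_compose[OF _ c])
next
  case False
  then have "\<And>x. kern b w x = 0" by (auto simp: kern_def)
  then show ?thesis by simp
qed

end

context setting3
begin

lemma KKm: "(\<lambda>w. ennreal (indicator Bx w * KK t x w)) \<in> borel_measurable (PiM {1..t} (\<lambda>_. lborel))"
proof -
  have "(\<lambda>w. indicator Bx w * ennreal (gg (Suc t) (w(Suc t := x)))) \<in> borel_measurable (PiM {1..t} (\<lambda>_. lborel))"
    by (rule integrand_meas2)
  moreover have "\<And>w. w \<in> space (PiM {1..t} (\<lambda>_. lborel)) \<Longrightarrow>
      indicator Bx w * ennreal (gg (Suc t) (w(Suc t := x))) = ennreal (indicator Bx w * KK t x w)"
    by (simp add: gg_upd indicator_mult_ennreal)
  ultimately show ?thesis by (rule measurable_cong[THEN iffD1, rotated])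
qed

lemma KK_tendsto:
  assumes a: "0 < a" "a < 1" and c: "c \<longlonglongrightarrow> a"
  shows "(\<lambda>n. KK t (c n) w) \<longlonglongrightarrow> KK t a w"
proof (cases "w \<in> unit_cube t")
  case True
  have "(\<lambda>n. aa t w * kern False (prev w (Suc t)) (c n) + bb t w * kern True (prev w (Suc t)) (c n))
        \<longlonglongrightarrow> aa t w * kern False (prev w (Suc t)) a + bb t w * kern True (prev w (Suc t)) a"
    by (intro tendsto_intros kern_tendsto[OF a c])
  then show ?thesis using True by (simp add: KK_def)
next
  case False
  then show ?thesis by (simp add: KK_def)
qed

lemma Hcont: "continuous_on {0<..<1} (\<lambda>x. enn2real (H x))"
  unfolding continuous_on_sequentially
proof (intro allI ballI impI)
  fix s :: "nat \<Rightarrow> real" and a :: real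
  assume a: "a \<in> {0<..<1}" and s: "(\<forall>n. s n \<in> {0<..<1}) \<and> s \<longlonglongrightarrow> a"
  then have sl: "s \<longlonglongrightarrow> a" by simp
  define \<alpha> where "\<alpha> = a / 2"
  define \<beta> where "\<beta> = (1 + a) / 2"
  have ab: "0 < \<alpha>" "\<alpha> \<le> \<beta>" "\<beta> < 1" "\<alpha> < a" "a < \<beta>" using a by (auto simp: \<alpha>_def \<beta>_def)
  obtain C where C: "C \<ge> 0" "\<forall>x\<in>{\<alpha>..\<beta>}. \<forall>w. ennreal (indicator Bx w * KK t x w) \<le> ennreal (gg t w) * ennreal C"
    using H_le[OF ab(1-3)] by blast
  define c where "c n = max \<alpha> (min \<beta> (s n))" for n
  have cab: "c n \<in> {\<alpha>..\<beta>}" for n using ab by (auto simp: c_def)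
  have "(\<lambda>n. max \<alpha> (min \<beta> (s n))) \<longlonglongrightarrow> max \<alpha> (min \<beta> a)"
    by (intro tendsto_intros sl)
  moreover have "c = (\<lambda>n. max \<alpha> (min \<beta> (s n)))" by (simp add: fun_eq_iff c_def)
  ultimately have cl: "c \<longlonglongrightarrow> a" using ab by simp
  have ev: "eventually (\<lambda>n. H (c n) = H (s n)) sequentially"
  proof -
    have "eventually (\<lambda>n. \<alpha> < s n) sequentially" by (rule order_tendstoD(1)[OF sl ab(4)])
    moreover have "eventually (\<lambda>n. s n < \<beta>) sequentially" by (rule order_tendstoD(2)[OF sl ab(5)])
    ultimately show ?thesis
      by eventually_elim (simp add: c_def)
  qed
  have gCm: "(\<lambda>w. ennreal (gg t w) * ennreal C) \<in> borel_measurable (PiM {1..t} (\<lambda>_. lborel))" by measurable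
  have conv: "(\<lambda>n. H (c n)) \<longlonglongrightarrow> H a"
    unfolding H_KK
  proof (rule nn_integral_dominated_convergence[OF KKm KKm gCm])
    show "AE w in PiM {1..t} (\<lambda>_. lborel). ennreal (indicator Bx w * KK t (c n) w) \<le> ennreal (gg t w) * ennreal C" for n
    proof (rule AE_I2)
      fix w show "ennreal (indicator Bx w * KK t (c n) w) \<le> ennreal (gg t w) * ennreal C"
        using C(2) cab[of n] by simp
    qed
    have "(\<integral>\<^sup>+w. ennreal (gg t w) * ennreal C \<partial>PiM {1..t} (\<lambda>_. lborel)) = (\<integral>\<^sup>+w. ennreal (gg t w) \<partial>PiM {1..t} (\<lambda>_. lborel)) * ennreal C"
      by (rule nn_integral_multc) measurable
    also have "\<dots> = ennreal C" unfolding gint by simp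
    finally show "(\<integral>\<^sup>+w. ennreal (gg t w) * ennreal C \<partial>PiM {1..t} (\<lambda>_. lborel)) < \<infinity>"
      by simp
    show "AE w in PiM {1..t} (\<lambda>_. lborel). (\<lambda>n. ennreal (indicator Bx w * KK t (c n) w)) \<longlonglongrightarrow> ennreal (indicator Bx w * KK t a w)"
    proof (intro AE_I2 tendsto_ennrealI tendsto_mult tendsto_const)
      fix w show "(\<lambda>n. KK t (c n) w) \<longlonglongrightarrow> KK t a w" by (rule KK_tendsto) (use a cl in auto)
    qed
  qed
  have "(\<lambda>n. H (s n)) \<longlonglongrightarrow> H a" by (rule Lim_transform_eventually[OF conv ev])
  moreover have "ennreal (enn2real (H a)) = H a" using H_fin[of a] by simp
  ultimately have "(\<lambda>n. H (s n)) \<longlonglongrightarrow> ennreal (enn2real (H a))" by simp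
  then have "(\<lambda>n. enn2real (H (s n))) \<longlonglongrightarrow> enn2real (H a)"
    by (rule tendsto_enn2real) simp
  then show "((\<lambda>x. enn2real (H x)) \<circ> s) \<longlonglongrightarrow> enn2real (H a)" by (simp add: comp_def)
qed

end

context setting3
begin

lemma Xm: "X i \<in> borel_measurable M" using model unfolding model_Ms_def by auto

lemma Vm[measurable]: "Vseq \<theta> p q X i \<in> borel_measurable M"
  by (rule Vseq_meas) (simp add: Xm)

lemma stepA:
  assumes A: "A \<in> sets borel"
  shows "emeasure M ({\<omega>\<in>space M. \<forall>i\<in>{1..t}. Vseq \<theta> p q X i \<omega> \<le> v0 i} \<inter> (Vseq \<theta> p q X (Suc t) -` A \<inter> space M))
       = (\<integral>\<^sup>+x. indicator A x * H x \<partial>lborel)"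
proof -
  interpret L: product_sigma_finite "\<lambda>_::nat. lborel::real measure" by (rule L_psf)
  have D: "distributed M (PiM {1..Suc t} (\<lambda>_. lborel)) (\<lambda>\<omega>. \<lambda>i\<in>{1..Suc t}. Vseq \<theta> p q X i \<omega>) (\<lambda>v. ennreal (gg (Suc t) v))"
    by (rule P1_dist[OF model])
  define E where "E = Pi\<^sub>E {1..Suc t} (\<lambda>i. if i = Suc t then A else {..v0 i})"
  have E: "E \<in> sets (PiM {1..Suc t} (\<lambda>_. lborel))"
    unfolding E_def by (rule sets_PiM_I_finite) (use A in auto)
  have IN: "{1..Suc t} = insert (Suc t) {1..t}" by auto
  have memE: "(\<lambda>i\<in>{1..Suc t}. f i) \<in> E \<longleftrightarrow> f (Suc t) \<in> A \<and> (\<forall>i\<in>{1..t}. f i \<le> v0 i)" for f :: "nat \<Rightarrow> real"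
  proof -
    have "(\<lambda>i\<in>{1..Suc t}. f i) \<in> E \<longleftrightarrow> (\<forall>i\<in>insert (Suc t) {1..t}. f i \<in> (if i = Suc t then A else {..v0 i}))"
      unfolding E_def restrict_PiE_iff IN ..
    also have "\<dots> \<longleftrightarrow> f (Suc t) \<in> A \<and> (\<forall>i\<in>{1..t}. f i \<le> v0 i)"
      by auto
    finally show ?thesis .
  qed
  have pre: "{\<omega>\<in>space M. \<forall>i\<in>{1..t}. Vseq \<theta> p q X i \<omega> \<le> v0 i} \<inter> (Vseq \<theta> p q X (Suc t) -` A \<inter> space M)
      = (\<lambda>\<omega>. \<lambda>i\<in>{1..Suc t}. Vseq \<theta> p q X i \<omega>) -` E \<inter> space M"
    unfolding vimage_def by (simp only: memE) blast
  have indE: "indicator E (w(Suc t := x)) = indicator A x * (indicator Bx w :: ennreal)"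
    if w: "w \<in> space (PiM {1..t} (\<lambda>_. lborel :: real measure))" for w x
  proof -
    have we: "w \<in> extensional {1..t}" using w by (simp add: space_PiM PiE_iff)
    have e1: "w(Suc t := x) \<in> extensional {1..Suc t}" using we by (auto simp: extensional_def)
    have r: "restrict (w(Suc t := x)) {1..Suc t} = w(Suc t := x)"
      using e1 by (rule extensional_restrict)
    have "w(Suc t := x) \<in> E \<longleftrightarrow> (w(Suc t := x)) (Suc t) \<in> A \<and> (\<forall>i\<in>{1..t}. (w(Suc t := x)) i \<le> v0 i)"
      using memE[of "w(Suc t := x)", unfolded r] by simp
    also have "\<dots> \<longleftrightarrow> x \<in> A \<and> (\<forall>i\<in>{1..t}. w i \<le> v0 i)" by simp
    also have "\<dots> \<longleftrightarrow> x \<in> A \<and> w \<in> Bx" using we unfolding Bx_def PiE_iff by simp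
    finally have "w(Suc t := x) \<in> E \<longleftrightarrow> x \<in> A \<and> w \<in> Bx" .
    then show ?thesis by (simp split: split_indicator)
  qed
  have ggm: "(\<lambda>v. ennreal (gg (Suc t) v)) \<in> borel_measurable (PiM {1..Suc t} (\<lambda>_. lborel))" by measurable
  have "emeasure M ({\<omega>\<in>space M. \<forall>i\<in>{1..t}. Vseq \<theta> p q X i \<omega> \<le> v0 i} \<inter> (Vseq \<theta> p q X (Suc t) -` A \<inter> space M))
      = emeasure (distr M (PiM {1..Suc t} (\<lambda>_. lborel)) (\<lambda>\<omega>. \<lambda>i\<in>{1..Suc t}. Vseq \<theta> p q X i \<omega>)) E"
    unfolding pre by (rule emeasure_distr[symmetric, OF distributed_measurable[OF D] E])
  also have "\<dots> = (\<integral>\<^sup>+v. ennreal (gg (Suc t) v) * indicator E v \<partial>PiM {1..Suc t} (\<lambda>_. lborel))"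
    unfolding distributed_distr_eq_density[OF D] by (rule emeasure_density[OF ggm E])
  also have "\<dots> = (\<integral>\<^sup>+x. (\<integral>\<^sup>+w. ennreal (gg (Suc t) (w(Suc t := x))) * indicator E (w(Suc t := x)) \<partial>PiM {1..t} (\<lambda>_. lborel)) \<partial>lborel)"
    unfolding IN by (rule L.product_nn_integral_insert_rev) (use ggm E IN in auto)
  also have "\<dots> = (\<integral>\<^sup>+x. indicator A x * H x \<partial>lborel)"
  proof (rule nn_integral_cong)
    fix x :: real
    have "(\<integral>\<^sup>+w. ennreal (gg (Suc t) (w(Suc t := x))) * indicator E (w(Suc t := x)) \<partial>PiM {1..t} (\<lambda>_. lborel))
        = (\<integral>\<^sup>+w. indicator A x * (indicator Bx w * ennreal (gg (Suc t) (w(Suc t := x)))) \<partial>PiM {1..t} (\<lambda>_. lborel))"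
      by (intro nn_integral_cong) (simp add: indE mult_ac)
    also have "\<dots> = indicator A x * H x"
      unfolding H_def by (rule nn_integral_cmult) (rule integrand_meas2)
    finally show "(\<integral>\<^sup>+w. ennreal (gg (Suc t) (w(Suc t := x))) * indicator E (w(Suc t := x)) \<partial>PiM {1..t} (\<lambda>_. lborel))
        = indicator A x * H x" .
  qed
  finally show ?thesis .
qed

lemma P3:
  "\<exists>h :: real \<Rightarrow> real.
     distributed (uniform_measure M {\<omega> \<in> space M. \<forall>i\<in>{1..t}. Vseq \<theta> p q X i \<omega> \<le> v0 i})
                 lborel (Vseq \<theta> p q X (Suc t)) (\<lambda>x. ennreal (h x))
     \<and> continuous_on {0<..<1} h
     \<and> (\<forall>x\<in>{0<..<1}. 0 < h x)
     \<and> (\<forall>x. x \<notin> {0<..<1} \<longrightarrow> h x = 0)"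
proof -
  interpret M: prob_space M using model unfolding model_Ms_def by auto
  define S where "S = {\<omega> \<in> space M. \<forall>i\<in>{1..t}. Vseq \<theta> p q X i \<omega> \<le> v0 i}"
  have S: "S \<in> sets M"
  proof -
    have "(\<lambda>\<omega>. \<lambda>i\<in>{1..t}. Vseq \<theta> p q X i \<omega>) \<in> measurable M (PiM {1..t} (\<lambda>_. lborel))"
      by (rule measurable_restrict) simp
    from measurable_sets[OF this Bx_sets] have "(\<lambda>\<omega>. \<lambda>i\<in>{1..t}. Vseq \<theta> p q X i \<omega>) -` Bx \<inter> space M \<in> sets M" .
    moreover have "(\<lambda>\<omega>. \<lambda>i\<in>{1..t}. Vseq \<theta> p q X i \<omega>) -` Bx \<inter> space M = S"
    proof -
      have m: "(\<lambda>i\<in>{1..t}. Vseq \<theta> p q X i \<omega>) \<in> Bx \<longleftrightarrow> (\<forall>i\<in>{1..t}. Vseq \<theta> p q X i \<omega> \<le> v0 i)" for \<omega>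
        unfolding Bx_def restrict_PiE_iff by simp
      show ?thesis unfolding S_def vimage_def by (simp only: m) blast
    qed
    ultimately show ?thesis by simp
  qed
  define P where "P = measure M S"
  have P: "0 < P" unfolding P_def S_def by (rule P2[OF model v0])
  have eS: "emeasure M S = ennreal P" unfolding P_def by (rule M.emeasure_eq_measure)
  define h where "h x = enn2real (H x) / P" for x
  have hH: "ennreal (h x) = H x / ennreal P" for x
  proof -
    have "ennreal (h x) = ennreal (enn2real (H x)) / ennreal P"
      unfolding h_def by (rule divide_ennreal[symmetric]) (simp_all add: P)
    then show ?thesis using H_fin[of x] by simp
  qed
  have hm: "h \<in> borel_measurable borel" unfolding h_def[abs_def] by measurable
  have Vm': "Vseq \<theta> p q X (Suc t) \<in> measurable (uniform_measure M S) lborel"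
    using Vm[of "Suc t"] measurable_cong_sets[of "uniform_measure M S" M lborel lborel] by simp
  have dist: "distr (uniform_measure M S) lborel (Vseq \<theta> p q X (Suc t)) = density lborel (\<lambda>x. ennreal (h x))"
  proof (rule measure_eqI)
    fix A assume "A \<in> sets (distr (uniform_measure M S) lborel (Vseq \<theta> p q X (Suc t)))"
    then have A: "A \<in> sets borel" by simp
    have pA: "Vseq \<theta> p q X (Suc t) -` A \<inter> space M \<in> sets M"
      by (rule measurable_sets[OF Vm A])
    have "emeasure (distr (uniform_measure M S) lborel (Vseq \<theta> p q X (Suc t))) A
        = emeasure (uniform_measure M S) (Vseq \<theta> p q X (Suc t) -` A \<inter> space M)"
      using emeasure_distr[OF Vm', of A] A by simp
    also have "\<dots> = emeasure M (S \<inter> (Vseq \<theta> p q X (Suc t) -` A \<inter> space M)) / emeasure M S"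
      by (rule emeasure_uniform_measure[OF S pA])
    also have "\<dots> = (\<integral>\<^sup>+x. indicator A x * H x \<partial>lborel) / ennreal P"
    proof -
      have "emeasure M (S \<inter> (Vseq \<theta> p q X (Suc t) -` A \<inter> space M)) = (\<integral>\<^sup>+x. indicator A x * H x \<partial>lborel)"
        unfolding S_def by (rule stepA[OF A])
      then show ?thesis by (simp only: eS)
    qed
    also have "\<dots> = (\<integral>\<^sup>+x. indicator A x * H x / ennreal P \<partial>lborel)"
      by (rule nn_integral_divide[symmetric]) (use A in measurable)
    also have "\<dots> = (\<integral>\<^sup>+x. ennreal (h x) * indicator A x \<partial>lborel)"
      by (intro nn_integral_cong) (metis hH ennreal_times_divide mult.commute)
    also have "\<dots> = emeasure (density lborel (\<lambda>x. ennreal (h x))) A"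
      using A hm by (simp add: emeasure_density)
    finally show "emeasure (distr (uniform_measure M S) lborel (Vseq \<theta> p q X (Suc t))) A
        = emeasure (density lborel (\<lambda>x. ennreal (h x))) A" .
  qed simp
  show ?thesis
    unfolding S_def[symmetric]
  proof (intro exI conjI)
    show "distributed (uniform_measure M S) lborel (Vseq \<theta> p q X (Suc t)) (\<lambda>x. ennreal (h x))"
      unfolding distributed_def using dist Vm' hm by simp
    show "continuous_on {0<..<1} h"
      unfolding h_def by (intro continuous_intros Hcont) (use P in simp)
    show "\<forall>x\<in>{0<..<1}. 0 < h x"
    proof
      fix x :: real assume "x \<in> {0<..<1}"
      then have "0 < H x" by (intro H_pos) auto
      then have "0 < enn2real (H x)" using H_fin[of x] by (simp add: enn2real_positive_iff)
      then show "0 < h x" using P by (simp add: h_def)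
    qed
    show "\<forall>x. x \<notin> {0<..<1} \<longrightarrow> h x = 0"
      by (auto simp: h_def H_zero)
  qed
qed

end

theorem mainTheorem20:
  fixes M :: "'a measure" and \<theta> :: real and p q :: "real \<Rightarrow> real"
    and \<tau> :: "'a \<Rightarrow> nat" and X :: "nat \<Rightarrow> 'a \<Rightarrow> real"
  assumes model: "model_Ms M \<theta> p q \<tau> X"
    and A1: "assumption_A1 p q"
  defines "V \<equiv> Vseq \<theta> p q X"
  shows
    "(\<forall>t\<ge>1. \<exists>g :: (nat \<Rightarrow> real) \<Rightarrow> real.
        distributed M (PiM {1..t} (\<lambda>_. lborel)) (\<lambda>\<omega>. \<lambda>i\<in>{1..t}. V i \<omega>) (\<lambda>v. ennreal (g v))
        \<and> continuous_on (unit_cube t) g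
        \<and> (\<forall>v\<in>unit_cube t. 0 < g v)
        \<and> (\<forall>v. v \<notin> unit_cube t \<longrightarrow> g v = 0))
     \<and> (\<forall>t\<ge>1. \<forall>v\<in>unit_cube t.
          0 < measure M {\<omega> \<in> space M. \<forall>i\<in>{1..t}. V i \<omega> \<le> v i})
     \<and> (\<forall>t\<ge>1. \<forall>v\<in>unit_cube t. \<exists>h :: real \<Rightarrow> real.
          distributed (uniform_measure M {\<omega> \<in> space M. \<forall>i\<in>{1..t}. V i \<omega> \<le> v i})
                      lborel (V (Suc t)) (\<lambda>x. ennreal (h x))
          \<and> continuous_on {0<..<1} h
          \<and> (\<forall>x\<in>{0<..<1}. 0 < h x)
          \<and> (\<forall>x. x \<notin> {0<..<1} \<longrightarrow> h x = 0))"
proof -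
  obtain fp where fp: "distributed (density lborel (\<lambda>x. ennreal (p x))) lborel (LR p q) (\<lambda>y. ennreal (fp y))"
      "continuous_on {0<..} fp" "\<forall>y>0. 0 < fp y" "\<forall>y\<le>0. fp y = 0"
    using A1 unfolding assumption_A1_def cont_pos_density_Rplus_def by blast
  obtain fq where fq: "distributed (density lborel (\<lambda>x. ennreal (q x))) lborel (LR p q) (\<lambda>y. ennreal (fq y))"
      "continuous_on {0<..} fq" "\<forall>y>0. 0 < fq y" "\<forall>y\<le>0. fq y = 0"
    using A1 unfolding assumption_A1_def cont_pos_density_Rplus_def by blast
  have st: "setting \<theta> p q fp fq"
  proof
    show "0 < \<theta>" "\<theta> < 1" "p \<in> borel_measurable borel" "q \<in> borel_measurable borel"
      "\<And>x. 0 \<le> p x" "\<And>x. 0 \<le> q x"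
      "(\<integral>\<^sup>+x. ennreal (p x) \<partial>lborel) = 1" "(\<integral>\<^sup>+x. ennreal (q x) \<partial>lborel) = 1"
      using model unfolding model_Ms_def by auto
  qed (use fp fq in auto)
  interpret setting \<theta> p q fp fq by (rule st)
  show ?thesis
  proof (intro conjI allI impI ballI)
    fix t :: nat assume t: "1 \<le> t"
    show "\<exists>g :: (nat \<Rightarrow> real) \<Rightarrow> real.
        distributed M (PiM {1..t} (\<lambda>_. lborel)) (\<lambda>\<omega>. \<lambda>i\<in>{1..t}. V i \<omega>) (\<lambda>v. ennreal (g v))
        \<and> continuous_on (unit_cube t) g
        \<and> (\<forall>v\<in>unit_cube t. 0 < g v)
        \<and> (\<forall>v. v \<notin> unit_cube t \<longrightarrow> g v = 0)"
      unfolding V_def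
      using P1_dist[OF model, of t] gg_cont[of t] gg_pos[of _ t] gg_out[of _ t] by blast
  next
    fix t :: nat and v assume t: "1 \<le> t" and v: "v \<in> unit_cube t"
    show "0 < measure M {\<omega> \<in> space M. \<forall>i\<in>{1..t}. V i \<omega> \<le> v i}"
      unfolding V_def by (rule P2[OF model v])
  next
    fix t :: nat and v assume t: "1 \<le> t" and v: "v \<in> unit_cube t"
    interpret S3: setting3 \<theta> p q fp fq M \<tau> X t v
      by (rule setting3.intro[OF st]) (unfold_locales, rule model, rule t, rule v)
    show "\<exists>h :: real \<Rightarrow> real.
          distributed (uniform_measure M {\<omega> \<in> space M. \<forall>i\<in>{1..t}. V i \<omega> \<le> v i})
                      lborel (V (Suc t)) (\<lambda>x. ennreal (h x))
          \<and> continuous_on {0<..<1} h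
          \<and> (\<forall>x\<in>{0<..<1}. 0 < h x)
          \<and> (\<forall>x. x \<notin> {0<..<1} \<longrightarrow> h x = 0)"
      unfolding V_def by (rule S3.P3)
  qed
qed

end
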